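(* Let $G$ be a tree with $n\ge k\ge1$ vertices and let $P^*$ be a longest path of $G$. Then $h^r_k(G)\ge (n-k)+\sum_{e\in E} d^k_{P^*}(e)$.
   Context: All graphs are finite, simple, undirected. A configuration of $k$ agents is a $k$-tuple of pairwise distinct vertices of $G$ whose induced subgraph is connected (identified with its vertex set when convenient). Configurations $(v_1,\dots,v_k)$, $(v'_1,\dots,v'_k)$ are adjacent if for every $i$ either $v_i=v'_i$ or $(v_i,v'_i)\in E$. A restricted transition walk is a sequence of configurations $\mathcal C_0,\dots,\mathcal C_l$ such that consecutive configurations are adjacent and $\mathcal C_{t+1}$ contains exactly one vertex not in $\mathcal C_t$; it is spanning if every vertex lies in some $\mathcal C_t$. $h^r_k(G)$ is the minimum length of a spanning restricted transition walk. For a tree $G$, a path $P$ and $k\ge1$, define $d^k_P(e)\in\{0,1\}$ for every edge $e$: $d^k_P(e)=0$ if $e$ lies on $P$; otherwise write $e=(u,v)$ with $u$ closer to $P$ than $v$, let $T_P(e)$ be the component of $G-e$ containing $v$, rooted at $v$, and set $d^k_P(e)=1$ if $T_P(e)$ has height at least $k-1$ (equivalently, some vertex of $T_P(e)$ has distance at least $k$ from $u$), and $d^k_P(e)=0$ otherwise. *)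

theory Defs
  imports Main "HOL-Library.Extended_Nat"
begin

definition simple_graph :: "'a set \<Rightarrow> 'a set set \<Rightarrow> bool" where
  "simple_graph V E \<longleftrightarrow> finite V \<and> (\<forall>e\<in>E. \<exists>u v. e = {u, v} \<and> u \<noteq> v \<and> u \<in> V \<and> v \<in> V)"

definition adj_rel :: "'a set set \<Rightarrow> ('a \<times> 'a) set" where
  "adj_rel E = {(x, y). {x, y} \<in> E}"

definition connected_on :: "'a set set \<Rightarrow> 'a set \<Rightarrow> bool" where
  "connected_on E S \<longleftrightarrow> S \<noteq> {} \<and>
     (\<forall>u\<in>S. \<forall>v\<in>S. (u, v) \<in> (adj_rel E \<inter> (S \<times> S))\<^sup>*)"

definition is_path :: "'a set \<Rightarrow> 'a set set \<Rightarrow> 'a list \<Rightarrow> bool" where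
  "is_path V E p \<longleftrightarrow> p \<noteq> [] \<and> distinct p \<and> set p \<subseteq> V \<and>
     (\<forall>i. Suc i < length p \<longrightarrow> {p ! i, p ! Suc i} \<in> E)"

definition has_cycle :: "'a set \<Rightarrow> 'a set set \<Rightarrow> bool" where
  "has_cycle V E \<longleftrightarrow> (\<exists>p. is_path V E p \<and> length p \<ge> 3 \<and> {last p, hd p} \<in> E)"

definition is_tree :: "'a set \<Rightarrow> 'a set set \<Rightarrow> bool" where
  "is_tree V E \<longleftrightarrow> simple_graph V E \<and> connected_on E V \<and> \<not> has_cycle V E"

definition longest_path :: "'a set \<Rightarrow> 'a set set \<Rightarrow> 'a list \<Rightarrow> bool" where
  "longest_path V E p \<longleftrightarrow> is_path V E p \<and> (\<forall>q. is_path V E q \<longrightarrow> length q \<le> length p)"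

definition path_edges :: "'a list \<Rightarrow> 'a set set" where
  "path_edges p = {{p ! i, p ! Suc i} | i. Suc i < length p}"

definition gdist :: "'a set set \<Rightarrow> 'a \<Rightarrow> 'a \<Rightarrow> nat" where
  "gdist E u w = (LEAST n. (u, w) \<in> adj_rel E ^^ n)"

definition dist_to_path :: "'a set set \<Rightarrow> 'a \<Rightarrow> 'a list \<Rightarrow> nat" where
  "dist_to_path E u p = (LEAST n. \<exists>x\<in>set p. gdist E u x = n)"

definition comp_minus :: "'a set \<Rightarrow> 'a set set \<Rightarrow> 'a set \<Rightarrow> 'a \<Rightarrow> 'a set" where
  "comp_minus V E e v = {w \<in> V. (v, w) \<in> (adj_rel (E - {e}))\<^sup>*}"

definition dkP :: "nat \<Rightarrow> 'a set \<Rightarrow> 'a set set \<Rightarrow> 'a list \<Rightarrow> 'a set \<Rightarrow> nat" where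
  "dkP k V E p e =
     (if e \<in> path_edges p then 0
      else if (\<exists>u v. e = {u, v} \<and> dist_to_path E u p < dist_to_path E v p \<and>
                    (\<exists>w \<in> comp_minus V E e v. gdist E u w \<ge> k))
      then 1 else 0)"

definition is_config :: "'a set \<Rightarrow> 'a set set \<Rightarrow> nat \<Rightarrow> 'a list \<Rightarrow> bool" where
  "is_config V E k c \<longleftrightarrow> length c = k \<and> distinct c \<and> set c \<subseteq> V \<and> connected_on E (set c)"

definition config_adj :: "'a set set \<Rightarrow> 'a list \<Rightarrow> 'a list \<Rightarrow> bool" where
  "config_adj E c c' \<longleftrightarrow> length c = length c' \<and>
     (\<forall>i < length c. c ! i = c' ! i \<or> {c ! i, c' ! i} \<in> E)"

(* restricted transition walk C_0, ..., C_l given as a nonempty list (its length is l+1) *)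
definition restricted_walk :: "'a set \<Rightarrow> 'a set set \<Rightarrow> nat \<Rightarrow> 'a list list \<Rightarrow> bool" where
  "restricted_walk V E k cs \<longleftrightarrow> cs \<noteq> [] \<and> (\<forall>c\<in>set cs. is_config V E k c) \<and>
     (\<forall>t. Suc t < length cs \<longrightarrow>
        config_adj E (cs ! t) (cs ! Suc t) \<and> card (set (cs ! Suc t) - set (cs ! t)) = 1)"

definition spanning_walk :: "'a set \<Rightarrow> 'a set set \<Rightarrow> nat \<Rightarrow> 'a list list \<Rightarrow> bool" where
  "spanning_walk V E k cs \<longleftrightarrow> restricted_walk V E k cs \<and> (\<Union>c\<in>set cs. set c) = V"

(* h^r_k(G): minimum length; infinity if no spanning restricted transition walk exists *)
definition hrk :: "nat \<Rightarrow> 'a set \<Rightarrow> 'a set set \<Rightarrow> enat" where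
  "hrk k V E = (INF cs \<in> {cs. spanning_walk V E k cs}. enat (length cs - 1))"

end

theory Submission
  imports Defs
begin
definition walk :: "('a \<times> 'a) set \<Rightarrow> 'a list \<Rightarrow> bool" where
  "walk R xs \<longleftrightarrow> (\<forall>i. Suc i < length xs \<longrightarrow> (xs ! i, xs ! Suc i) \<in> R)"

lemma walk_Cons: "walk R (a # xs) \<longleftrightarrow> walk R xs \<and> (xs \<noteq> [] \<longrightarrow> (a, hd xs) \<in> R)"
  unfolding walk_def
  apply (cases xs)
   apply simp
  apply (auto simp: nth_Cons split: nat.splits)
  done

lemma walk_drop: "walk R xs \<Longrightarrow> walk R (drop i xs)"
  unfolding walk_def by (auto simp: add.commute)

lemma walk_mono: "walk R xs \<Longrightarrow> R \<subseteq> S \<Longrightarrow> walk S xs"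
  unfolding walk_def by auto

lemma walk_relpow: "walk R xs \<Longrightarrow> xs \<noteq> [] \<Longrightarrow> (hd xs, last xs) \<in> R ^^ (length xs - 1)"
proof (induction xs)
  case Nil then show ?case by simp
next
  case (Cons a xs)
  show ?case
  proof (cases xs)
    case Nil then show ?thesis by simp
  next
    case (Cons b ys)
    then have "walk R xs" "(a, hd xs) \<in> R" using Cons.prems walk_Cons by fastforce+
    then have "(hd xs, last xs) \<in> R ^^ (length xs - 1)" using Cons.IH Cons by simp
    then have "(a, last xs) \<in> R ^^ Suc (length xs - 1)" using \<open>(a, hd xs) \<in> R\<close>
      by (meson relpow_Suc_I2)
    then show ?thesis using Cons by simp
  qed
qed

lemma rtrancl_distinct_walk:
  assumes "(a, b) \<in> R\<^sup>*"
  shows "\<exists>xs. xs \<noteq> [] \<and> distinct xs \<and> walk R xs \<and> hd xs = a \<and> last xs = b"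
  using assms
proof (induction rule: converse_rtrancl_induct)
  case base
  then show ?case by (intro exI[of _ "[b]"]) (auto simp: walk_def)
next
  case (step y z)
  then obtain xs where xs: "xs \<noteq> []" "distinct xs" "walk R xs" "hd xs = z" "last xs = b" by blast
  show ?case
  proof (cases "y \<in> set xs")
    case True
    then obtain i where i: "i < length xs" "xs ! i = y" by (auto simp: in_set_conv_nth)
    show ?thesis
      apply (intro exI[of _ "drop i xs"])
      using xs i by (auto simp: walk_drop hd_drop_conv_nth)
  next
    case False
    show ?thesis
      apply (intro exI[of _ "y # xs"])
      using xs False step.hyps(1) by (auto simp: walk_Cons)
  qed
qed

lemma walk_set_rtrancl: "walk R xs \<Longrightarrow> i < length xs \<Longrightarrow> j < length xs \<Longrightarrow> i \<le> j \<Longrightarrow> (xs ! i, xs ! j) \<in> R\<^sup>*"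
proof (induction j)
  case 0 then show ?case by simp
next
  case (Suc j)
  show ?case
  proof (cases "i = Suc j")
    case True then show ?thesis by simp
  next
    case False
    then have "(xs ! i, xs ! j) \<in> R\<^sup>*" using Suc by simp
    moreover have "(xs ! j, xs ! Suc j) \<in> R" using Suc.prems unfolding walk_def by auto
    ultimately show ?thesis by simp
  qed
qed

lemma relpow_sym: "sym R \<Longrightarrow> (a, b) \<in> R ^^ n \<Longrightarrow> (b, a) \<in> R ^^ n"
proof (induction n arbitrary: a b)
  case 0 then show ?case by simp
next
  case (Suc n)
  from Suc.prems(2) obtain c where "(a, c) \<in> R" "(c, b) \<in> R ^^ n" using relpow_Suc_D2 by metis
  then have "(b, c) \<in> R ^^ n" "(c, a) \<in> R" using Suc by (auto dest: symD)
  then show ?case by (rule relpow_Suc_I)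
qed


lemma sym_adj_rel: "sym (adj_rel E)"
  unfolding adj_rel_def sym_def by (auto simp: insert_commute)

locale tree =
  fixes V :: "'a set" and E :: "'a set set"
  assumes tree: "is_tree V E"
begin

abbreviation "adj \<equiv> adj_rel E"
abbreviation "d \<equiv> gdist E"
abbreviation "cm u v \<equiv> comp_minus V E {u, v} v"

lemma finV: "finite V" using tree unfolding is_tree_def simple_graph_def by auto

lemma edgeE: "e \<in> E \<Longrightarrow> \<exists>u v. e = {u, v} \<and> u \<noteq> v \<and> u \<in> V \<and> v \<in> V"
  using tree unfolding is_tree_def simple_graph_def by auto

lemma finE: "finite E"
proof -
  have "E \<subseteq> Pow V" using edgeE by fastforce
  then show ?thesis using finV by (meson finite_Pow_iff finite_subset)
qed

lemma adj_iff: "(x, y) \<in> adj_rel F \<longleftrightarrow> {x, y} \<in> F" unfolding adj_rel_def by auto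

lemma edge_V: "{x, y} \<in> E \<Longrightarrow> x \<in> V \<and> y \<in> V \<and> x \<noteq> y"
  using edgeE[of "{x,y}"] by (auto simp: doubleton_eq_iff)

lemma adj_V: "(x, y) \<in> adj_rel F \<Longrightarrow> F \<subseteq> E \<Longrightarrow> x \<in> V \<and> y \<in> V \<and> x \<noteq> y"
  using edge_V by (auto simp: adj_iff)

lemma conn: "x \<in> V \<Longrightarrow> y \<in> V \<Longrightarrow> (x, y) \<in> adj\<^sup>*"
  using tree unfolding is_tree_def connected_on_def
  by (meson inf_le1 rtrancl_mono subsetD)

lemma acyc: "\<not> has_cycle V E" using tree unfolding is_tree_def by auto

lemma relpow_V: "(x, y) \<in> adj_rel F ^^ n \<Longrightarrow> F \<subseteq> E \<Longrightarrow> x \<in> V \<Longrightarrow> y \<in> V"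
proof (induction n arbitrary: y)
  case 0 then show ?case by simp
next
  case (Suc n)
  then obtain c where "(x, c) \<in> adj_rel F ^^ n" "(c, y) \<in> adj_rel F" by auto
  then show ?case using Suc adj_V by blast
qed

lemma d_relpow: "x \<in> V \<Longrightarrow> y \<in> V \<Longrightarrow> (x, y) \<in> adj ^^ (d x y)"
  unfolding gdist_def using conn[of x y] by (metis LeastI rtrancl_power)

lemma d_le: "(x, y) \<in> adj ^^ n \<Longrightarrow> d x y \<le> n"
  unfolding gdist_def by (rule Least_le)

lemma d_refl[simp]: "d x x = 0"
  using d_le[of x x 0] by simp

lemma d_sym: "d x y = d y x"
proof -
  have "\<And>n. (x, y) \<in> adj ^^ n \<longleftrightarrow> (y, x) \<in> adj ^^ n"
    by (meson relpow_sym sym_adj_rel)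
  then show ?thesis unfolding gdist_def by simp
qed

lemma d_tri: "x \<in> V \<Longrightarrow> y \<in> V \<Longrightarrow> z \<in> V \<Longrightarrow> d x z \<le> d x y + d y z"
proof -
  assume a: "x \<in> V" "y \<in> V" "z \<in> V"
  then have "(x, z) \<in> adj ^^ (d x y + d y z)"
    using d_relpow[of x y] d_relpow[of y z] by (auto simp: relpow_add)
  then show ?thesis by (rule d_le)
qed

lemma d_zero: "x \<in> V \<Longrightarrow> y \<in> V \<Longrightarrow> d x y = 0 \<longleftrightarrow> x = y"
  using d_relpow[of x y] by auto

lemma d_edge: "{x, y} \<in> E \<Longrightarrow> d x y = 1"
proof -
  assume e: "{x, y} \<in> E"
  then have "(x, y) \<in> adj ^^ 1" by (auto simp: adj_iff)
  then have "d x y \<le> 1" by (rule d_le)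
  moreover have "d x y \<noteq> 0" using e edge_V d_zero by metis
  ultimately show ?thesis by simp
qed

lemma d_step: "x \<in> V \<Longrightarrow> y \<in> V \<Longrightarrow> x \<noteq> y \<Longrightarrow> \<exists>c. {x, c} \<in> E \<and> Suc (d c y) = d x y"
proof -
  assume a: "x \<in> V" "y \<in> V" "x \<noteq> y"
  then have n: "d x y \<noteq> 0" using d_zero by auto
  then obtain m where m: "d x y = Suc m" using not0_implies_Suc by blast
  then obtain c where c: "(x, c) \<in> adj" "(c, y) \<in> adj ^^ m"
    using d_relpow[OF a(1,2)] by (metis relpow_Suc_D2)
  have cV: "c \<in> V" using c adj_V by blast
  have "d c y \<le> m" using c d_le by auto
  moreover have "d x y \<le> d x c + d c y" using d_tri a cV by auto
  moreover have "d x c = 1" using c d_edge by (auto simp: adj_iff)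
  ultimately have "Suc (d c y) = d x y" using m by linarith
  then show ?thesis using c by (auto simp: adj_iff)
qed

lemma walk_V: "walk (adj_rel F) xs \<Longrightarrow> F \<subseteq> E \<Longrightarrow> hd xs \<in> V \<Longrightarrow> set xs \<subseteq> V"
proof (induction xs)
  case Nil then show ?case by simp
next
  case (Cons a xs)
  then show ?case
    by (cases xs) (auto simp: walk_Cons dest: adj_V)
qed

lemma walk_is_path: "walk (adj_rel F) xs \<Longrightarrow> F \<subseteq> E \<Longrightarrow> distinct xs \<Longrightarrow> xs \<noteq> [] \<Longrightarrow> hd xs \<in> V
   \<Longrightarrow> is_path V E xs"
  unfolding is_path_def using walk_V[of F xs] unfolding walk_def by (auto simp: adj_iff)

lemma cm_comm: "comp_minus V E {u, v} = comp_minus V E {v, u}"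
  by (simp add: insert_commute)

lemma cm_self: "v \<in> V \<Longrightarrow> v \<in> cm u v"
  unfolding comp_minus_def by auto

lemma cm_V: "z \<in> cm u v \<Longrightarrow> z \<in> V"
  unfolding comp_minus_def by auto

lemma cm_closed: "c \<in> cm u v \<Longrightarrow> {c, b} \<in> E \<Longrightarrow> {c, b} \<noteq> {u, v} \<Longrightarrow> b \<in> cm u v"
proof -
  assume a: "c \<in> cm u v" "{c, b} \<in> E" "{c, b} \<noteq> {u, v}"
  then have "(v, c) \<in> (adj_rel (E - {{u, v}}))\<^sup>*" unfolding comp_minus_def by auto
  moreover have "(c, b) \<in> adj_rel (E - {{u, v}})" using a by (auto simp: adj_iff)
  ultimately have "(v, b) \<in> (adj_rel (E - {{u, v}}))\<^sup>*" by simp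
  then show ?thesis unfolding comp_minus_def using edge_V a(2) by auto
qed

lemma cm_disj: "{u, v} \<in> E \<Longrightarrow> cm u v \<inter> cm v u = {}"
proof (rule ccontr)
  assume e: "{u, v} \<in> E" and "cm u v \<inter> cm v u \<noteq> {}"
  then obtain z where z: "z \<in> cm u v" "z \<in> cm v u" by blast
  let ?R = "adj_rel (E - {{u, v}})"
  have "(v, z) \<in> ?R\<^sup>*" using z(1) unfolding comp_minus_def by auto
  moreover have "(u, z) \<in> ?R\<^sup>*" using z(2) unfolding comp_minus_def by (auto simp: insert_commute)
  then have "(z, u) \<in> ?R\<^sup>*" using sym_adj_rel
    by (metis rtrancl_converseI sym_conv_converse_eq)
  ultimately have "(v, u) \<in> ?R\<^sup>*" by simp
  then obtain xs where xs: "xs \<noteq> []" "distinct xs" "walk ?R xs" "hd xs = v" "last xs = u"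
    using rtrancl_distinct_walk by metis
  have uv: "u \<noteq> v" "u \<in> V" "v \<in> V" using edge_V e by auto
  have p: "is_path V E xs" using walk_is_path[OF xs(3) _ xs(2,1)] xs(4) uv by auto
  have "length xs \<noteq> 1"
  proof
    assume "length xs = 1"
    then obtain a where "xs = [a]" by (cases xs) auto
    then show False using xs uv by auto
  qed
  moreover have "length xs \<noteq> 2"
  proof
    assume l: "length xs = 2"
    then have "(xs ! 0, xs ! 1) \<in> ?R" using xs(3) unfolding walk_def by auto
    moreover have "xs ! 0 = v" using xs(1,4) by (simp add: hd_conv_nth)
    moreover have "xs ! 1 = u" using xs(1,5) l by (simp add: last_conv_nth)
    ultimately show False by (auto simp: adj_iff insert_commute)
  qed
  moreover have "length xs \<noteq> 0" using xs by auto
  ultimately have "length xs \<ge> 3" by linarith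
  moreover have "{last xs, hd xs} \<in> E" using xs e by (simp add: insert_commute)
  ultimately have "has_cycle V E" unfolding has_cycle_def using p by blast
  then show False using acyc by simp
qed

lemma cm_union: "{u, v} \<in> E \<Longrightarrow> z \<in> V \<Longrightarrow> z \<in> cm u v \<or> z \<in> cm v u"
proof -
  assume e: "{u, v} \<in> E" and z: "z \<in> V"
  have uV: "u \<in> V" using e edge_V by auto
  have "(u, z) \<in> adj\<^sup>*" using conn uV z by auto
  then show ?thesis
  proof (induction rule: rtrancl_induct)
    case base then show ?case using cm_self[OF uV, of v] by simp
  next
    case (step y z)
    have yz: "{y, z} \<in> E" using step(2) by (simp add: adj_iff)
    show ?case
    proof (cases "{y, z} = {u, v}")
      case True
      then have "z = u \<or> z = v" by (auto simp: doubleton_eq_iff)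
      moreover have "u \<in> cm v u" "v \<in> cm u v" using cm_self edge_V e by auto
      ultimately show ?thesis by blast
    next
      case False
      then have F2: "{y, z} \<noteq> {v, u}" by (simp add: insert_commute)
      show ?thesis
      proof (cases "y \<in> cm u v")
        case True then show ?thesis using cm_closed[OF True yz False] by simp
      next
        case False
        then have "y \<in> cm v u" using step(3) by simp
        then show ?thesis using cm_closed[OF _ yz F2] by simp
      qed
    qed
  qed
qed

lemma edge_leave: "{u, v} \<in> E \<Longrightarrow> c \<in> cm u v \<Longrightarrow> b \<in> V \<Longrightarrow> b \<notin> cm u v \<Longrightarrow> {c, b} \<in> E \<Longrightarrow> c = v \<and> b = u"
proof -
  assume a: "{u, v} \<in> E" "c \<in> cm u v" "b \<in> V" "b \<notin> cm u v" "{c, b} \<in> E"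
  then have eq: "{c, b} = {u, v}" using cm_closed by blast
  have "v \<in> cm u v" using cm_self edge_V a(1) by auto
  then have "b \<noteq> v" using a(4) by auto
  then show ?thesis using eq edge_V a(5) by (auto simp: doubleton_eq_iff)
qed

lemma walk_cross:
  assumes e: "{u, v} \<in> E"
  shows "(a, b) \<in> adj ^^ n \<Longrightarrow> a \<in> cm u v \<Longrightarrow> b \<in> V \<Longrightarrow> b \<notin> cm u v \<Longrightarrow>
    \<exists>n1 n2. n = n1 + 1 + n2 \<and> (a, v) \<in> adj ^^ n1 \<and> (u, b) \<in> adj ^^ n2"
proof (induction n arbitrary: b)
  case 0 then show ?case by simp
next
  case (Suc n)
  then obtain c where c: "(a, c) \<in> adj ^^ n" "(c, b) \<in> adj" by auto
  have cV: "c \<in> V" using c(2) adj_V by blast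
  show ?case
  proof (cases "c \<in> cm u v")
    case True
    then have "c = v \<and> b = u" using edge_leave[OF e True Suc.prems(3,4)] c(2) by (auto simp: adj_iff)
    then show ?thesis using c(1) by (intro exI[of _ n] exI[of _ 0]) auto
  next
    case False
    then obtain n1 n2 where "n = n1 + 1 + n2" "(a, v) \<in> adj ^^ n1" "(u, c) \<in> adj ^^ n2"
      using Suc.IH[OF c(1) Suc.prems(2) cV] by blast
    then show ?thesis using c(2) by (intro exI[of _ n1] exI[of _ "Suc n2"]) auto
  qed
qed

lemma d_cross: "{u, v} \<in> E \<Longrightarrow> a \<in> cm u v \<Longrightarrow> b \<in> V \<Longrightarrow> b \<notin> cm u v \<Longrightarrow> d a b = d a v + 1 + d u b"
proof -
  assume a: "{u, v} \<in> E" "a \<in> cm u v" "b \<in> V" "b \<notin> cm u v"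
  have aV: "a \<in> V" using a(2) cm_V by auto
  have uv: "u \<in> V" "v \<in> V" using a(1) edge_V by auto
  obtain n1 n2 where n: "d a b = n1 + 1 + n2" "(a, v) \<in> adj ^^ n1" "(u, b) \<in> adj ^^ n2"
    using walk_cross[OF a(1) d_relpow[OF aV a(3)] a(2-4)] by blast
  have "d a v \<le> n1" "d u b \<le> n2" using n d_le by auto
  moreover have "d a b \<le> d a v + d v b" "d v b \<le> d v u + d u b" using d_tri aV a(3) uv by auto
  moreover have "d v u = 1" using d_edge a(1) by (simp add: insert_commute)
  ultimately show ?thesis using n(1) by linarith
qed

lemma side_dist: "{u, v} \<in> E \<Longrightarrow> z \<in> cm u v \<Longrightarrow> d u z = Suc (d v z)"
proof -
  assume a: "{u, v} \<in> E" "z \<in> cm u v"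
  have uV: "u \<in> V" using a edge_V by auto
  have "u \<notin> cm u v" using cm_disj[OF a(1)] cm_self[OF uV, of v] by (auto simp: insert_commute)
  then have "d z u = d z v + 1 + d u u" using d_cross[OF a(1,2) uV] by simp
  then show ?thesis by (simp add: d_sym)
qed

lemma side_iff: "{u, v} \<in> E \<Longrightarrow> z \<in> V \<Longrightarrow> z \<in> cm u v \<longleftrightarrow> d v z < d u z"
proof -
  assume a: "{u, v} \<in> E" "z \<in> V"
  have a': "{v, u} \<in> E" using a by (simp add: insert_commute)
  show ?thesis
  proof
    assume "z \<in> cm u v" then show "d v z < d u z" using side_dist a by auto
  next
    assume l: "d v z < d u z"
    show "z \<in> cm u v"
    proof (rule ccontr)
      assume "z \<notin> cm u v"
      then have "z \<in> cm v u" using cm_union[OF a] by auto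
      then show False using side_dist[OF a'] l by auto
    qed
  qed
qed

lemma dich: "{u, v} \<in> E \<Longrightarrow> z \<in> V \<Longrightarrow> d u z = Suc (d v z) \<or> d v z = Suc (d u z)"
proof -
  assume a: "{u, v} \<in> E" "z \<in> V"
  then have a': "{v, u} \<in> E" by (simp add: insert_commute)
  show ?thesis using cm_union[OF a] side_dist[OF a(1)] side_dist[OF a'] by blast
qed

lemma d_CL: "{u, v} \<in> E \<Longrightarrow> z \<in> V \<Longrightarrow> w \<in> V \<Longrightarrow> d u z < d v z \<Longrightarrow> d v w < d u w
  \<Longrightarrow> d z w = d z u + 1 + d v w"
proof -
  assume a: "{u, v} \<in> E" "z \<in> V" "w \<in> V" "d u z < d v z" "d v w < d u w"
  have w: "w \<in> cm u v" using side_iff a by auto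
  have z: "z \<notin> cm u v" using side_iff a by auto
  have "d w z = d w v + 1 + d u z" using d_cross[OF a(1) w a(2) z] .
  then show ?thesis by (simp add: d_sym)
qed

end

context tree begin

lemma path_edge: "is_path V E q \<Longrightarrow> Suc i < length q \<Longrightarrow> {q ! i, q ! Suc i} \<in> E"
  unfolding is_path_def by auto

lemma path_V: "is_path V E q \<Longrightarrow> i < length q \<Longrightarrow> q ! i \<in> V"
  unfolding is_path_def by auto

lemma path_drop: "is_path V E q \<Longrightarrow> i < length q \<Longrightarrow> is_path V E (drop i q)"
  unfolding is_path_def by (auto dest: in_set_dropD simp: add.commute)

lemma geo0: "is_path V E q \<Longrightarrow> j < length q \<Longrightarrow> d (q ! 0) (q ! j) = j"
proof (induction j)
  case 0 then show ?case by simp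
next
  case (Suc j)
  let ?e = "{q ! Suc j, q ! j}"
  let ?R = "adj_rel (E - {?e})"
  have e: "?e \<in> E" using path_edge[OF Suc.prems(1), of j] Suc.prems by (simp add: insert_commute)
  have dist: "distinct q" using Suc.prems unfolding is_path_def by auto
  have r: "j' \<le> j \<Longrightarrow> (q ! 0, q ! j') \<in> ?R\<^sup>*" for j'
  proof (induction j')
    case 0 then show ?case by simp
  next
    case (Suc j')
    have ne: "{q ! j', q ! Suc j'} \<noteq> ?e"
    proof
      assume "{q ! j', q ! Suc j'} = ?e"
      then have "q ! Suc j \<in> {q ! j', q ! Suc j'}" by auto
      moreover have "q ! Suc j \<noteq> q ! j'" "q ! Suc j \<noteq> q ! Suc j'"
        using dist Suc.prems \<open>Suc j < length q\<close> by (auto simp: nth_eq_iff_index_eq)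
      ultimately show False by auto
    qed
    have "{q ! j', q ! Suc j'} \<in> E" using path_edge[OF \<open>is_path V E q\<close>, of j'] Suc.prems \<open>Suc j < length q\<close> by simp
    then have "(q ! j', q ! Suc j') \<in> ?R" using ne by (simp add: adj_iff)
    then show ?case using Suc by simp
  qed
  have "(q ! 0, q ! j) \<in> ?R\<^sup>*" using r by simp
  then have "(q ! j, q ! 0) \<in> ?R\<^sup>*"
    using sym_adj_rel by (metis rtrancl_converseI sym_conv_converse_eq)
  moreover have "q ! 0 \<in> V" using path_V[OF Suc.prems(1), of 0] Suc.prems(2) by (cases q) auto
  ultimately have "q ! 0 \<in> cm (q ! Suc j) (q ! j)" unfolding comp_minus_def by auto
  then have "d (q ! Suc j) (q ! 0) = Suc (d (q ! j) (q ! 0))" using side_dist[OF e] by simp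
  then show ?case using Suc by (simp add: d_sym)
qed

lemma geo: "is_path V E q \<Longrightarrow> i \<le> j \<Longrightarrow> j < length q \<Longrightarrow> d (q ! i) (q ! j) = j - i"
proof -
  assume a: "is_path V E q" "i \<le> j" "j < length q"
  have "is_path V E (drop i q)" using path_drop a by auto
  then have "d (drop i q ! 0) (drop i q ! (j - i)) = j - i" using geo0[of "drop i q" "j - i"] a by auto
  moreover have "drop i q ! 0 = q ! i" "drop i q ! (j - i) = q ! j" using a by auto
  ultimately show ?thesis by simp
qed

definition dd :: "nat \<Rightarrow> nat \<Rightarrow> nat" where "dd i j = (i - j) + (j - i)"

lemma geo': "is_path V E q \<Longrightarrow> i < length q \<Longrightarrow> j < length q \<Longrightarrow> d (q ! i) (q ! j) = dd i j"
  unfolding dd_def using geo[of q i j] geo[of q j i] d_sym by (cases "i \<le> j") auto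

lemma path_inj: "is_path V E q \<Longrightarrow> i < length q \<Longrightarrow> j < length q \<Longrightarrow> q ! i = q ! j \<Longrightarrow> i = j"
  unfolding is_path_def by (simp add: nth_eq_iff_index_eq)

lemma path_exists: "a \<in> V \<Longrightarrow> b \<in> V \<Longrightarrow> \<exists>q. is_path V E q \<and> hd q = a \<and> last q = b"
proof -
  assume a: "a \<in> V" "b \<in> V"
  obtain xs where xs: "xs \<noteq> []" "distinct xs" "walk adj xs" "hd xs = a" "last xs = b"
    using rtrancl_distinct_walk[OF conn[OF a]] by blast
  then show ?thesis using walk_is_path[OF xs(3) _ xs(2,1)] a by auto
qed

lemma d_path_le: "is_path V E q \<Longrightarrow> d (hd q) (last q) \<le> length q - 1"
proof -
  assume q: "is_path V E q"
  then have "walk adj q" "q \<noteq> []" unfolding is_path_def walk_def by (auto simp: adj_iff)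
  then show ?thesis using walk_relpow d_le by blast
qed

lemma d_path: "is_path V E q \<Longrightarrow> d (hd q) (last q) = length q - 1"
proof -
  assume q: "is_path V E q"
  then have ne: "q \<noteq> []" unfolding is_path_def by auto
  then show ?thesis using geo[OF q, of 0 "length q - 1"] by (simp add: hd_conv_nth last_conv_nth)
qed

lemma diam: "longest_path V E P \<Longrightarrow> a \<in> V \<Longrightarrow> b \<in> V \<Longrightarrow> d a b \<le> length P - 1"
proof -
  assume P: "longest_path V E P" and a: "a \<in> V" "b \<in> V"
  obtain q where q: "is_path V E q" "hd q = a" "last q = b" using path_exists a by blast
  have "d a b \<le> length q - 1" using d_path_le q by auto
  moreover have "length q \<le> length P" using P q unfolding longest_path_def by auto
  ultimately show ?thesis by linarith
qed

lemma dtp_ex: "p \<noteq> [] \<Longrightarrow> \<exists>q\<in>set p. dist_to_path E u p = d u q"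
proof -
  assume "p \<noteq> []"
  then obtain q where "q \<in> set p" by (cases p) auto
  then have "\<exists>n. \<exists>x\<in>set p. d u x = n" by blast
  then have "\<exists>x\<in>set p. d u x = (LEAST n. \<exists>x\<in>set p. d u x = n)" by (rule LeastI_ex)
  then show ?thesis unfolding dist_to_path_def by metis
qed

lemma dtp_le: "q \<in> set p \<Longrightarrow> dist_to_path E u p \<le> d u q"
  unfolding dist_to_path_def by (rule Least_le) auto

lemma path_side:
  assumes q: "is_path V E q" and e: "{u, v} \<in> E" and ne: "{u, v} \<notin> path_edges q"
  shows "(\<forall>x\<in>set q. d u x < d v x) \<or> (\<forall>x\<in>set q. d v x < d u x)"
proof -
  have e': "{v, u} \<in> E" using e by (simp add: insert_commute)
  have step: "c \<in> cm a b \<Longrightarrow> {a, b} = {u, v} \<Longrightarrow> Suc i < length q \<Longrightarrow> q ! i = c \<Longrightarrow> q ! Suc i \<in> cm a b" for a b c i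
  proof -
    assume h: "c \<in> cm a b" "{a, b} = {u, v}" "Suc i < length q" "q ! i = c"
    have "{q ! i, q ! Suc i} \<noteq> {a, b}" using ne h(2,3) unfolding path_edges_def by auto
    then show ?thesis using cm_closed[of c a b "q ! Suc i"] h path_edge[OF q h(3)] by auto
  qed
  have all: "q ! 0 \<in> cm a b \<Longrightarrow> {a, b} = {u, v} \<Longrightarrow> \<forall>i < length q. q ! i \<in> cm a b" for a b
  proof -
    assume h: "q ! 0 \<in> cm a b" "{a, b} = {u, v}"
    show ?thesis
    proof (intro allI impI)
      fix i assume "i < length q"
      then show "q ! i \<in> cm a b"
      proof (induction i)
        case 0 then show ?case using h by simp
      next
        case (Suc i) then show ?case using step[OF _ h(2)] by auto
      qed
    qed
  qed
  have q0: "q ! 0 \<in> V" using path_V q unfolding is_path_def by auto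
  show ?thesis
  proof (cases "q ! 0 \<in> cm u v")
    case True
    then have "\<forall>i < length q. q ! i \<in> cm u v" using all by auto
    then have "\<forall>x\<in>set q. d v x < d u x" using side_iff[OF e] cm_V by (metis in_set_conv_nth)
    then show ?thesis by simp
  next
    case False
    then have "q ! 0 \<in> cm v u" using cm_union[OF e q0] by simp
    then have "\<forall>i < length q. q ! i \<in> cm v u" using all[of v u] by (auto simp: insert_commute)
    then have "\<forall>x\<in>set q. d u x < d v x" using side_iff[OF e'] cm_V by (metis in_set_conv_nth)
    then show ?thesis by simp
  qed
qed

end

context tree begin

definition Aor :: "nat \<Rightarrow> 'a set \<Rightarrow> ('a \<times> 'a) set" where
  "Aor k S = {(u, v). {u, v} \<in> E \<and> (\<forall>x\<in>S. d u x < d v x) \<and> (\<exists>w\<in>V. d v w < d u w \<and> k \<le> d u w)}"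

lemma dkP_char:
  assumes q: "is_path V E Q" and e: "e \<in> E"
  shows "dkP k V E Q e = (if \<exists>u v. e = {u, v} \<and> (u, v) \<in> Aor k (set Q) then 1 else 0)"
proof (cases "e \<in> path_edges Q")
  case True
  then obtain i where i: "Suc i < length Q" "e = {Q ! i, Q ! Suc i}" unfolding path_edges_def by auto
  have "\<not> (\<exists>u v. e = {u, v} \<and> (u, v) \<in> Aor k (set Q))"
  proof
    assume "\<exists>u v. e = {u, v} \<and> (u, v) \<in> Aor k (set Q)"
    then obtain u v where uv: "e = {u, v}" "\<forall>x\<in>set Q. d u x < d v x" unfolding Aor_def by auto
    have "v \<in> set Q" using uv(1) i by (auto simp: doubleton_eq_iff)
    then show False using uv(2) by fastforce
  qed
  then show ?thesis using True unfolding dkP_def by auto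
next
  case False
  have ne: "Q \<noteq> []" using q unfolding is_path_def by auto
  have key: "e = {u, v} \<Longrightarrow> ((dist_to_path E u Q < dist_to_path E v Q \<and> (\<exists>w\<in>comp_minus V E e v. d u w \<ge> k))
     \<longleftrightarrow> (u, v) \<in> Aor k (set Q))" for u v
  proof -
    assume ev: "e = {u, v}"
    have euv: "{u, v} \<in> E" using e ev by simp
    have s1: "(\<exists>w\<in>comp_minus V E e v. d u w \<ge> k) \<longleftrightarrow> (\<exists>w\<in>V. d v w < d u w \<and> k \<le> d u w)"
      using side_iff[OF euv] cm_V ev by blast
    have s2: "dist_to_path E u Q < dist_to_path E v Q \<longleftrightarrow> (\<forall>x\<in>set Q. d u x < d v x)"
    proof
      assume l: "dist_to_path E u Q < dist_to_path E v Q"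
      show "\<forall>x\<in>set Q. d u x < d v x"
      proof (rule ccontr)
        assume "\<not> (\<forall>x\<in>set Q. d u x < d v x)"
        then have all: "\<forall>x\<in>set Q. d v x < d u x" using path_side[OF q euv] False ev by auto
        obtain z where z: "z \<in> set Q" "dist_to_path E u Q = d u z" using dtp_ex ne by blast
        have "dist_to_path E v Q \<le> d v z" using dtp_le z by auto
        then show False using l z all by fastforce
      qed
    next
      assume all: "\<forall>x\<in>set Q. d u x < d v x"
      obtain z where z: "z \<in> set Q" "dist_to_path E v Q = d v z" using dtp_ex ne by blast
      have "dist_to_path E u Q \<le> d u z" using dtp_le z by auto
      then show "dist_to_path E u Q < dist_to_path E v Q" using z all by fastforce
    qed
    show ?thesis using s1 s2 euv unfolding Aor_def by auto
  qed
  have "(\<exists>u v. e = {u, v} \<and> dist_to_path E u Q < dist_to_path E v Q \<and> (\<exists>w\<in>comp_minus V E e v. k \<le> d u w))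
    = (\<exists>u v. e = {u, v} \<and> (u, v) \<in> Aor k (set Q))" (is "?L = ?R")
  proof
    assume ?L
    then obtain u v where "e = {u, v}" "dist_to_path E u Q < dist_to_path E v Q" "\<exists>w\<in>comp_minus V E e v. k \<le> d u w"
      by blast
    then show ?R using key[of u v] by blast
  next
    assume ?R
    then obtain u v where "e = {u, v}" "(u, v) \<in> Aor k (set Q)" by blast
    then show ?L using key[of u v] by blast
  qed
  then show ?thesis using False unfolding dkP_def by simp
qed

lemma Aor_fin: "finite (Aor k S)"
proof -
  have "Aor k S \<subseteq> V \<times> V" unfolding Aor_def using edge_V by auto
  then show ?thesis using finV finite_subset by blast
qed

lemma sum_dkP:
  assumes q: "is_path V E Q"
  shows "(\<Sum>e\<in>E. dkP k V E Q e) = card (Aor k (set Q))"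
proof -
  let ?P = "\<lambda>e. \<exists>u v. e = {u, v} \<and> (u, v) \<in> Aor k (set Q)"
  have "(\<Sum>e\<in>E. dkP k V E Q e) = (\<Sum>e\<in>E. if ?P e then 1 else 0)"
    using dkP_char[OF q] by (intro sum.cong) auto
  also have "\<dots> = card {e\<in>E. ?P e}"
    using sum.inter_filter[OF finE, of "\<lambda>_. 1::nat" ?P] by simp
  also have "{e\<in>E. ?P e} = (\<lambda>(u, v). {u, v}) ` Aor k (set Q)"
    unfolding Aor_def by auto
  also have "card \<dots> = card (Aor k (set Q))"
  proof (rule card_image)
    have ne: "Q \<noteq> []" using q unfolding is_path_def by auto
    then obtain z where z: "z \<in> set Q" by (cases Q) auto
    show "inj_on (\<lambda>(u, v). {u, v}) (Aor k (set Q))"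
    proof (rule inj_onI, clarsimp)
      fix a b c e
      assume h: "(a, b) \<in> Aor k (set Q)" "(c, e) \<in> Aor k (set Q)" "{a, b} = {c, e}"
      show "a = c \<and> b = e"
      proof (rule ccontr)
        assume "\<not> (a = c \<and> b = e)"
        then have "a = e \<and> b = c" using h(3) by (auto simp: doubleton_eq_iff)
        then show False using h(1,2) z unfolding Aor_def by fastforce
      qed
    qed
  qed
  finally show ?thesis .
qed

end

lemma list_cross: "xs \<noteq> [] \<Longrightarrow> hd xs \<in> A \<Longrightarrow> last xs \<notin> A \<Longrightarrow> \<exists>i. Suc i < length xs \<and> xs ! i \<in> A \<and> xs ! Suc i \<notin> A"
proof (induction xs)
  case Nil then show ?case by simp
next
  case (Cons a xs)
  show ?case
  proof (cases xs)
    case Nil then show ?thesis using Cons by simp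
  next
    case (Cons b ys)
    show ?thesis
    proof (cases "b \<in> A")
      case True
      then obtain i where "Suc i < length xs" "xs ! i \<in> A" "xs ! Suc i \<notin> A"
        using Cons.IH Cons.prems Cons by auto
      then show ?thesis by (intro exI[of _ "Suc i"]) auto
    next
      case False
      then show ?thesis using Cons.prems Cons by (intro exI[of _ 0]) auto
    qed
  qed
qed

context tree begin

lemma proj:
  assumes P: "is_path V E P" and z: "z \<in> V"
  shows "\<exists>i<length P. \<forall>j<length P. d z (P ! j) = d z (P ! i) + dd i j"
proof -
  have ne: "P \<noteq> []" using P unfolding is_path_def by auto
  obtain i where i: "i < length P" "\<forall>j. j < length P \<longrightarrow> d z (P ! i) \<le> d z (P ! j)"
    using ex_has_least_nat[of "\<lambda>i. i < length P" 0 "\<lambda>i. d z (P ! i)"] ne by auto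
  have up: "i \<le> j \<Longrightarrow> j < length P \<Longrightarrow> d z (P ! j) = d z (P ! i) + (j - i)" for j
  proof (induction j)
    case 0 then show ?case by simp
  next
    case (Suc j)
    show ?case
    proof (cases "i = Suc j")
      case True then show ?thesis by simp
    next
      case False
      then have ij: "i \<le> j" using Suc by simp
      then have IH: "d z (P ! j) = d z (P ! i) + (j - i)" using Suc by simp
      have e: "{P ! j, P ! Suc j} \<in> E" using path_edge[OF P] Suc by simp
      have Vs: "P ! i \<in> V" "P ! j \<in> V" "P ! Suc j \<in> V" using path_V[OF P] Suc i by auto
      have g1: "d (P ! i) (P ! j) = j - i" "d (P ! i) (P ! Suc j) = Suc j - i" using geo[OF P] ij Suc by auto
      show ?thesis
      proof (cases "d (P ! Suc j) z = Suc (d (P ! j) z)")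
        case True then show ?thesis using IH ij by (simp add: d_sym)
      next
        case False
        then have c: "d (P ! j) z = Suc (d (P ! Suc j) z)" using dich[OF e z] by auto
        have "d (P ! j) (P ! i) < d (P ! Suc j) (P ! i)" using g1 ij by (simp add: d_sym)
        then have "d (P ! i) z = d (P ! i) (P ! j) + 1 + d (P ! Suc j) z"
          using d_CL[OF e Vs(1) z] c by simp
        then have lt: "d z (P ! i) > d z (P ! Suc j)" by (simp add: d_sym)
        have "d z (P ! i) \<le> d z (P ! Suc j)" using i(2) Suc.prems by blast
        then show ?thesis using lt by linarith
      qed
    qed
  qed
  have down: "m \<le> i \<Longrightarrow> d z (P ! (i - m)) = d z (P ! i) + m" for m
  proof (induction m)
    case 0 then show ?case by simp
  next
    case (Suc m)
    define j where "j = i - Suc m"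
    have jj: "Suc j = i - m" "j < i" using Suc.prems unfolding j_def by auto
    have IH: "d z (P ! Suc j) = d z (P ! i) + m" using Suc jj by simp
    have sj: "Suc j < length P" using jj i by simp
    have e: "{P ! j, P ! Suc j} \<in> E" using path_edge[OF P sj] .
    have Vs: "P ! i \<in> V" "P ! j \<in> V" "P ! Suc j \<in> V" using path_V[OF P] jj i by auto
    have g1: "d (P ! j) (P ! i) = i - j" "d (P ! Suc j) (P ! i) = i - Suc j" using geo[OF P] jj i by auto
    show ?case
    proof (cases "d (P ! j) z = Suc (d (P ! Suc j) z)")
      case True then show ?thesis using IH jj unfolding j_def by (simp add: d_sym)
    next
      case False
      then have c: "d (P ! Suc j) z = Suc (d (P ! j) z)" using dich[OF e z] by auto
      have e': "{P ! Suc j, P ! j} \<in> E" using e by (simp add: insert_commute)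
      have "d (P ! Suc j) (P ! i) < d (P ! j) (P ! i)" using g1 jj by simp
      then have "d (P ! i) z = d (P ! i) (P ! Suc j) + 1 + d (P ! j) z"
        using d_CL[OF e' Vs(1) z] c by simp
      then have lt: "d z (P ! i) > d z (P ! j)" by (simp add: d_sym)
      have "j < length P" using jj i by simp
      then have "d z (P ! i) \<le> d z (P ! j)" using i(2) by blast
      then show ?thesis using lt by linarith
    qed
  qed
  show ?thesis
  proof (intro exI[of _ i] conjI allI impI)
    show "i < length P" by fact
    fix j assume j: "j < length P"
    show "d z (P ! j) = d z (P ! i) + dd i j"
    proof (cases "i \<le> j")
      case True then show ?thesis using up[OF True j] unfolding dd_def by simp
    next
      case False
      then have "d z (P ! (i - (i - j))) = d z (P ! i) + (i - j)" using down[of "i - j"] by linarith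
      then show ?thesis using False unfolding dd_def by simp
    qed
  qed
qed

lemma cross_Q:
  assumes Q: "is_path V E Q" and e: "{u, v} \<in> E" and h: "hd Q \<in> cm u v" and l: "last Q \<in> V" "last Q \<notin> cm u v"
  shows "\<exists>i. Suc i < length Q \<and> Q ! i = v \<and> Q ! Suc i = u"
proof -
  have ne: "Q \<noteq> []" using Q unfolding is_path_def by auto
  obtain i where i: "Suc i < length Q" "Q ! i \<in> cm u v" "Q ! Suc i \<notin> cm u v"
    using list_cross[OF ne h l(2)] by blast
  then show ?thesis using edge_leave[OF e i(2) path_V[OF Q i(1)] i(3) path_edge[OF Q i(1)]] by auto
qed

end

locale lem2 = tree +
  fixes P Q :: "'a list" and k ix iy :: nat
  assumes P: "longest_path V E P" and Q: "is_path V E Q" and k: "1 \<le> k"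
    and ix: "ix < length P" and iy: "iy < length P"
    and px: "\<forall>j<length P. d (hd Q) (P ! j) = d (hd Q) (P ! ix) + dd ix j"
    and py: "\<forall>j<length P. d (last Q) (P ! j) = d (last Q) (P ! iy) + dd iy j"
begin

abbreviation "x \<equiv> hd Q"
abbreviation "y \<equiv> last Q"
abbreviation "m \<equiv> length P - 1"
abbreviation "mq \<equiv> length Q - 1"

lemma PP: "is_path V E P" using P unfolding longest_path_def by auto
lemma Pne: "P \<noteq> []" using PP unfolding is_path_def by auto
lemma Qne: "Q \<noteq> []" using Q unfolding is_path_def by auto
lemma xV: "x \<in> V" using Q Qne unfolding is_path_def by auto
lemma yV: "y \<in> V" using Q Qne unfolding is_path_def by auto
lemma x0: "x = Q ! 0" using Qne by (simp add: hd_conv_nth)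
lemma ymq: "y = Q ! mq" using Qne by (simp add: last_conv_nth)

lemma posP: "j < length P \<Longrightarrow> d (P ! 0) (P ! j) = j \<and> d (P ! j) (P ! m) = m - j"
  using geo[OF PP, of 0 j] geo[OF PP, of j m] by auto

lemma diamP: "a \<in> V \<Longrightarrow> b \<in> V \<Longrightarrow> d a b \<le> m"
  using diam[OF P] by auto

lemma posQ: "j < length Q \<Longrightarrow> d x (Q ! j) = j \<and> d (Q ! j) y = mq - j"
  using geo[OF Q, of 0 j] geo[OF Q, of j mq] x0 ymq by auto

lemma deep_bound:
  assumes uv: "(u, v) \<in> Aor k (set P)" and i: "i < length P" and f: "\<forall>j<length P. d u (P ! j) = l + dd i j"
  shows "l + k \<le> i \<and> l + k \<le> m - i"
proof -
  obtain w where w: "w \<in> V" "d v w < d u w" "k \<le> d u w" and e: "{u, v} \<in> E"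
    and allP: "\<forall>z\<in>set P. d u z < d v z" using uv unfolding Aor_def by auto
  have uV: "u \<in> V" using e edge_V by auto
  have duw: "d u w = Suc (d v w)" using dich[OF e w(1)] w(2) by auto
  have P0: "P ! 0 \<in> set P" "P ! m \<in> set P" using Pne by auto
  have V0: "P ! 0 \<in> V" "P ! m \<in> V" using path_V[OF PP] Pne by auto
  have "d (P ! 0) w = d (P ! 0) u + 1 + d v w" using d_CL[OF e V0(1) w(1)] allP P0 w by auto
  moreover have "d u (P ! 0) = l + i" using f Pne unfolding dd_def by auto
  moreover have "d (P ! 0) w \<le> m" using diamP V0 w by auto
  ultimately have 1: "l + k \<le> m - i" using duw w(3) by (simp add: d_sym)
  have "d (P ! m) w = d (P ! m) u + 1 + d v w" using d_CL[OF e V0(2) w(1)] allP P0 w by auto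
  moreover have "d u (P ! m) = l + (m - i)" using f Pne i unfolding dd_def by auto
  moreover have "d (P ! m) w \<le> m" using diamP V0 w by auto
  ultimately have 2: "l + k \<le> i" using duw w(3) i by (simp add: d_sym)
  show ?thesis using 1 2 by simp
qed

lemma convexQ:
  assumes e: "{a, b} \<in> E" and hx: "d a x < d b x" and hy: "d a y < d b y"
  shows "\<forall>z\<in>set Q. d a z < d b z"
proof
  fix z assume "z \<in> set Q"
  then obtain i where i: "i < length Q" "z = Q ! i" by (auto simp: in_set_conv_nth)
  have zV: "z \<in> V" using path_V[OF Q i(1)] i by simp
  show "d a z < d b z"
  proof (rule ccontr)
    assume "\<not> d a z < d b z"
    then have c: "d b z < d a z" using dich[OF e zV] by auto
    have aV: "a \<in> V" using e edge_V by auto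
    have 1: "d x z = d x a + 1 + d b z" using d_CL[OF e xV zV hx c] .
    have 2: "d y z = d y a + 1 + d b z" using d_CL[OF e yV zV hy c] .
    have 3: "d x y \<le> d x a + d a y" using d_tri xV aV yV by auto
    have "d x z = i" "d z y = mq - i" using posQ i by auto
    moreover have "d x y = mq" using posQ[of mq] Qne ymq by auto
    moreover have "d z y = d y z" "d a y = d y a" by (simp_all add: d_sym)
    ultimately show False using 1 2 3 i by linarith
  qed
qed

lemma img_down:
  assumes j: "Suc j' = j" "j \<le> ix" "j \<le> iy" "k \<le> j" "j < length P"
  shows "(P ! j, P ! j') \<in> Aor k (set Q)"
proof -
  have e: "{P ! j, P ! j'} \<in> E" using path_edge[OF PP, of j'] j by (simp add: insert_commute)
  have j'l: "j' < length P" using j by simp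
  have a1: "d x (P ! j) = d x (P ! ix) + dd ix j" "d x (P ! j') = d x (P ! ix) + dd ix j'"
    using px j(5) j'l by blast+
  have a2: "d y (P ! j) = d y (P ! iy) + dd iy j" "d y (P ! j') = d y (P ! iy) + dd iy j'"
    using py j(5) j'l by blast+
  have hx: "d (P ! j) x < d (P ! j') x" using a1 j unfolding dd_def by (simp add: d_sym)
  have hy: "d (P ! j) y < d (P ! j') y" using a2 j unfolding dd_def by (simp add: d_sym)
  have w: "P ! 0 \<in> V" using path_V[OF PP] Pne by auto
  have "d (P ! j') (P ! 0) < d (P ! j) (P ! 0) \<and> k \<le> d (P ! j) (P ! 0)"
    using posP[of j] posP[of j'] j by (simp add: d_sym)
  then show ?thesis using convexQ[OF e hx hy] e w unfolding Aor_def by auto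
qed

lemma img_up:
  assumes j: "ix \<le> j" "iy \<le> j" "Suc j < length P" "k \<le> m - j"
  shows "(P ! j, P ! Suc j) \<in> Aor k (set Q)"
proof -
  have e: "{P ! j, P ! Suc j} \<in> E" using path_edge[OF PP, of j] j by simp
  have jl: "j < length P" using j by simp
  have a1: "d x (P ! j) = d x (P ! ix) + dd ix j" "d x (P ! Suc j) = d x (P ! ix) + dd ix (Suc j)"
    using px j(3) jl by blast+
  have a2: "d y (P ! j) = d y (P ! iy) + dd iy j" "d y (P ! Suc j) = d y (P ! iy) + dd iy (Suc j)"
    using py j(3) jl by blast+
  have hx: "d (P ! j) x < d (P ! Suc j) x" using a1 j unfolding dd_def by (simp add: d_sym)
  have hy: "d (P ! j) y < d (P ! Suc j) y" using a2 j unfolding dd_def by (simp add: d_sym)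
  have w: "P ! m \<in> V" using path_V[OF PP] Pne by auto
  have "d (P ! Suc j) (P ! m) < d (P ! j) (P ! m) \<and> k \<le> d (P ! j) (P ! m)"
    using posP[of j] posP[of "Suc j"] j by simp
  then show ?thesis using convexQ[OF e hx hy] e w unfolding Aor_def by auto
qed

lemma noP: "i < length P \<Longrightarrow> j < length P \<Longrightarrow> (P ! i, P ! j) \<notin> Aor k (set P)"
proof
  assume ij: "i < length P" "j < length P" and "(P ! i, P ! j) \<in> Aor k (set P)"
  then have a: "\<forall>z\<in>set P. d (P ! i) z < d (P ! j) z" unfolding Aor_def by auto
  have "P ! 0 \<in> set P" "P ! m \<in> set P" using Pne by auto
  then have "d (P ! 0) (P ! i) < d (P ! 0) (P ! j)" "d (P ! i) (P ! m) < d (P ! j) (P ! m)"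
    using a by (auto simp: d_sym)
  then show False using posP ij by auto
qed

lemma rev_notin: "(u, v) \<in> Aor k (set P) \<Longrightarrow> (v, u) \<notin> Aor k (set P)"
proof
  assume "(u, v) \<in> Aor k (set P)" "(v, u) \<in> Aor k (set P)"
  moreover have "P ! 0 \<in> set P" using Pne by auto
  ultimately show False unfolding Aor_def by fastforce
qed

lemma kind3x:
  assumes uv: "(u, v) \<in> Aor k (set P)" and hx: "d v x < d u x" and hy: "d u y < d v y"
  shows "d x u \<le> d x (P ! ix) \<and> (d x (P ! ix) - d x u) + k \<le> ix \<and> (d x (P ! ix) - d x u) + k \<le> m - ix
    \<and> Suc (d x v) < length Q \<and> v = Q ! (d x v) \<and> u = Q ! Suc (d x v) \<and> d x u = Suc (d x v)"
proof -
  have e: "{u, v} \<in> E" and allP: "\<forall>z\<in>set P. d u z < d v z" using uv unfolding Aor_def by auto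
  have dxu: "d u x = Suc (d v x)" using dich[OF e xV] hx by auto
  have f: "d x (P ! j) = d u (P ! j) + d x u" if j: "j < length P" for j
  proof -
    have "P ! j \<in> set P" "P ! j \<in> V" using j path_V[OF PP] by auto
    then have "d (P ! j) x = d (P ! j) u + 1 + d v x" using d_CL[OF e _ xV _ hx] allP by auto
    then show ?thesis using dxu by (simp add: d_sym)
  qed
  have le: "d x u \<le> d x (P ! ix)" using f[OF ix] by simp
  have fu: "\<forall>j<length P. d u (P ! j) = (d x (P ! ix) - d x u) + dd ix j"
  proof (intro allI impI)
    fix j assume j: "j < length P"
    have 1: "d x (P ! j) = d u (P ! j) + d x u" using f[OF j] .
    have 2: "d x (P ! j) = d x (P ! ix) + dd ix j" using px j by auto
    show "d u (P ! j) = (d x (P ! ix) - d x u) + dd ix j" using 1 2 le by linarith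
  qed
  have b: "(d x (P ! ix) - d x u) + k \<le> ix \<and> (d x (P ! ix) - d x u) + k \<le> m - ix"
    using deep_bound[OF uv ix fu] .
  have xin: "x \<in> cm u v" using side_iff[OF e xV] hx by simp
  have yout: "y \<notin> cm u v" using side_iff[OF e yV] hy by simp
  obtain i where i: "Suc i < length Q" "Q ! i = v" "Q ! Suc i = u"
    using cross_Q[OF Q e xin yV yout] by blast
  have "d x v = i" using posQ[of i] i by simp
  moreover have "d x u = Suc i" using posQ[of "Suc i"] i by simp
  ultimately show ?thesis using le b i by simp
qed

lemma kind3y:
  assumes uv: "(u, v) \<in> Aor k (set P)" and hy: "d v y < d u y" and hx: "d u x < d v x"
  shows "d y u \<le> d y (P ! iy) \<and> (d y (P ! iy) - d y u) + k \<le> iy \<and> (d y (P ! iy) - d y u) + k \<le> m - iy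
    \<and> Suc (d x u) < length Q \<and> u = Q ! (d x u) \<and> v = Q ! Suc (d x u) \<and> d x u + d y u = mq"
proof -
  have e: "{u, v} \<in> E" and allP: "\<forall>z\<in>set P. d u z < d v z" using uv unfolding Aor_def by auto
  have e': "{v, u} \<in> E" using e by (simp add: insert_commute)
  have dyu: "d u y = Suc (d v y)" using dich[OF e yV] hy by auto
  have f: "d y (P ! j) = d u (P ! j) + d y u" if j: "j < length P" for j
  proof -
    have "P ! j \<in> set P" "P ! j \<in> V" using j path_V[OF PP] by auto
    then have "d (P ! j) y = d (P ! j) u + 1 + d v y" using d_CL[OF e _ yV _ hy] allP by auto
    then show ?thesis using dyu by (simp add: d_sym)
  qed
  have le: "d y u \<le> d y (P ! iy)" using f[OF iy] by simp
  have fu: "\<forall>j<length P. d u (P ! j) = (d y (P ! iy) - d y u) + dd iy j"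
  proof (intro allI impI)
    fix j assume j: "j < length P"
    have 1: "d y (P ! j) = d u (P ! j) + d y u" using f[OF j] .
    have 2: "d y (P ! j) = d y (P ! iy) + dd iy j" using py j by auto
    show "d u (P ! j) = (d y (P ! iy) - d y u) + dd iy j" using 1 2 le by linarith
  qed
  have b: "(d y (P ! iy) - d y u) + k \<le> iy \<and> (d y (P ! iy) - d y u) + k \<le> m - iy"
    using deep_bound[OF uv iy fu] .
  have xin: "x \<in> cm v u" using side_iff[OF e' xV] hx by simp
  have yout: "y \<notin> cm v u" using side_iff[OF e' yV] hy by simp
  obtain i where i: "Suc i < length Q" "Q ! i = u" "Q ! Suc i = v"
    using cross_Q[OF Q e' xin yV yout] by blast
  have "d x u = i" "d u y = mq - i" using posQ[of i] i by auto
  moreover have "d y u = d u y" by (simp add: d_sym)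
  ultimately show ?thesis using le b i by simp
qed

lemma main2: "card (Aor k (set P)) \<le> card (Aor k (set Q))"
proof -
  define l1 where "l1 u = d x (P ! ix) - d x u" for u
  define l2 where "l2 u = d y (P ! iy) - d y u" for u
  define g3 where "g3 u v = (if d v x < d u x then
           (if ix \<le> iy then (P ! (ix - l1 u), P ! (ix - l1 u - 1)) else (P ! (ix + l1 u), P ! (Suc (ix + l1 u))))
        else (if ix \<le> iy then (P ! (iy + l2 u), P ! (Suc (iy + l2 u))) else (P ! (iy - l2 u), P ! (iy - l2 u - 1))))"
    for u v
  define f where "f = (\<lambda>(u, v). if (\<forall>z\<in>set Q. d u z < d v z) then (u, v)
     else if (\<forall>z\<in>set Q. d v z < d u z) then (v, u) else g3 u v)"
  have eV: "(u, v) \<in> Aor k (set P) \<Longrightarrow> {u, v} \<in> E \<and> {v, u} \<in> E" for u v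
    unfolding Aor_def by (auto simp: insert_commute)
  have K3x: "d u y < d v y" if uv: "(u, v) \<in> Aor k (set P)" and n2: "\<not> (\<forall>z\<in>set Q. d v z < d u z)"
    and hx: "d v x < d u x" for u v
  proof (rule ccontr)
    assume "\<not> d u y < d v y"
    then have "d v y < d u y" using dich[OF conjunct1[OF eV[OF uv]] yV] by auto
    then show False using convexQ[OF conjunct2[OF eV[OF uv]] hx] n2 by auto
  qed
  have K3y: "d u x < d v x \<and> d v y < d u y" if uv: "(u, v) \<in> Aor k (set P)" and n1: "\<not> (\<forall>z\<in>set Q. d u z < d v z)"
    and hx: "\<not> d v x < d u x" for u v
  proof -
    have 1: "d u x < d v x" using dich[OF conjunct1[OF eV[OF uv]] xV] hx by auto
    have "d v y < d u y"
    proof (rule ccontr)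
      assume "\<not> d v y < d u y"
      then have "d u y < d v y" using dich[OF conjunct1[OF eV[OF uv]] yV] by auto
      then show False using convexQ[OF conjunct1[OF eV[OF uv]] 1] n1 by auto
    qed
    then show ?thesis using 1 by simp
  qed
  have g3_in: "g3 u v \<in> Aor k (set Q) \<and> (\<exists>i j. i < length P \<and> j < length P \<and> g3 u v = (P ! i, P ! j))"
    if uv: "(u, v) \<in> Aor k (set P)" and n1: "\<not> (\<forall>z\<in>set Q. d u z < d v z)"
    and n2: "\<not> (\<forall>z\<in>set Q. d v z < d u z)" for u v
  proof (cases "d v x < d u x")
    case True
    have hy: "d u y < d v y" using K3x[OF uv n2 True] .
    have kk: "l1 u + k \<le> ix" "l1 u + k \<le> m - ix" using kind3x[OF uv True hy] unfolding l1_def by auto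
    show ?thesis
    proof (cases "ix \<le> iy")
      case c: True
      have "(P ! (ix - l1 u), P ! (ix - l1 u - 1)) \<in> Aor k (set Q)"
        using img_down[of "ix - l1 u - 1" "ix - l1 u"] kk c k ix by auto
      moreover have "ix - l1 u - 1 < length P" "ix - l1 u < length P" using ix by auto
      moreover have "g3 u v = (P ! (ix - l1 u), P ! (ix - l1 u - 1))" unfolding g3_def using True c by simp
      ultimately show ?thesis by (metis (no_types, lifting))
    next
      case c: False
      have "(P ! (ix + l1 u), P ! Suc (ix + l1 u)) \<in> Aor k (set Q)"
        using img_up[of "ix + l1 u"] kk c k ix by auto
      moreover have "ix + l1 u < length P" "Suc (ix + l1 u) < length P" using kk k ix by auto
      moreover have "g3 u v = (P ! (ix + l1 u), P ! Suc (ix + l1 u))" unfolding g3_def using True c by simp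
      ultimately show ?thesis by (metis (no_types, lifting))
    qed
  next
    case False
    have hh: "d u x < d v x" "d v y < d u y" using K3y[OF uv n1 False] by auto
    have kk: "l2 u + k \<le> iy" "l2 u + k \<le> m - iy" using kind3y[OF uv hh(2) hh(1)] unfolding l2_def by auto
    show ?thesis
    proof (cases "ix \<le> iy")
      case c: True
      have "(P ! (iy + l2 u), P ! Suc (iy + l2 u)) \<in> Aor k (set Q)"
        using img_up[of "iy + l2 u"] kk c k iy by auto
      moreover have "iy + l2 u < length P" "Suc (iy + l2 u) < length P" using kk k iy by auto
      moreover have "g3 u v = (P ! (iy + l2 u), P ! Suc (iy + l2 u))" unfolding g3_def using False c by simp
      ultimately show ?thesis by (metis (no_types, lifting))
    next
      case c: False
      have "(P ! (iy - l2 u), P ! (iy - l2 u - 1)) \<in> Aor k (set Q)"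
        using img_down[of "iy - l2 u - 1" "iy - l2 u"] kk c k iy by auto
      moreover have "iy - l2 u - 1 < length P" "iy - l2 u < length P" using iy by auto
      moreover have "g3 u v = (P ! (iy - l2 u), P ! (iy - l2 u - 1))" unfolding g3_def using False c by simp
      ultimately show ?thesis by (metis (no_types, lifting))
    qed
  qed
  have K2_in: "(v, u) \<in> Aor k (set Q)" if uv: "(u, v) \<in> Aor k (set P)" and h: "\<forall>z\<in>set Q. d v z < d u z" for u v
  proof -
    have e: "{u, v} \<in> E" and allP: "\<forall>z\<in>set P. d u z < d v z" using uv unfolding Aor_def by auto
    have uV: "u \<in> V" using e edge_V by auto
    obtain iu where iu: "iu < length P" "\<forall>j<length P. d u (P ! j) = d u (P ! iu) + dd iu j"
      using proj[OF PP uV] by blast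
    have b: "d u (P ! iu) + k \<le> iu" using deep_bound[OF uv iu] by simp
    have p0: "0 < length P" using Pne by simp
    have "d u (P ! 0) = d u (P ! iu) + dd iu 0" using iu(2) p0 by blast
    then have "d u (P ! 0) = d u (P ! iu) + iu" unfolding dd_def by simp
    moreover have "P ! 0 \<in> set P" "P ! 0 \<in> V" using Pne path_V[OF PP] by auto
    moreover have "d u (P ! 0) < d v (P ! 0)" using allP calculation by auto
    ultimately have "d u (P ! 0) < d v (P ! 0) \<and> k \<le> d v (P ! 0)" using b by linarith
    then show ?thesis using h eV[OF uv] \<open>P ! 0 \<in> V\<close> unfolding Aor_def by auto
  qed
  have g3_inj: "(u1, v1) = (u2, v2)"
    if a1: "(u1, v1) \<in> Aor k (set P)" "\<not> (\<forall>z\<in>set Q. d u1 z < d v1 z)" "\<not> (\<forall>z\<in>set Q. d v1 z < d u1 z)"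
    and a2: "(u2, v2) \<in> Aor k (set P)" "\<not> (\<forall>z\<in>set Q. d u2 z < d v2 z)" "\<not> (\<forall>z\<in>set Q. d v2 z < d u2 z)"
    and eq: "g3 u1 v1 = g3 u2 v2" for u1 v1 u2 v2
  proof -
    have pinj: "P ! i = P ! j \<Longrightarrow> i < length P \<Longrightarrow> j < length P \<Longrightarrow> i = j" for i j
      using path_inj[OF PP] by blast
    show ?thesis
    proof (cases "d v1 x < d u1 x")
      case T1: True
      have k1: "d x u1 \<le> d x (P ! ix) \<and> l1 u1 + k \<le> ix \<and> l1 u1 + k \<le> m - ix
        \<and> Suc (d x v1) < length Q \<and> v1 = Q ! (d x v1) \<and> u1 = Q ! Suc (d x v1) \<and> d x u1 = Suc (d x v1)"
        using kind3x[OF a1(1) T1 K3x[OF a1(1) a1(3) T1]] unfolding l1_def by blast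
      show ?thesis
      proof (cases "d v2 x < d u2 x")
        case T2: True
        have k2: "d x u2 \<le> d x (P ! ix) \<and> l1 u2 + k \<le> ix \<and> l1 u2 + k \<le> m - ix
          \<and> Suc (d x v2) < length Q \<and> v2 = Q ! (d x v2) \<and> u2 = Q ! Suc (d x v2) \<and> d x u2 = Suc (d x v2)"
          using kind3x[OF a2(1) T2 K3x[OF a2(1) a2(3) T2]] unfolding l1_def by blast
        have "l1 u1 = l1 u2"
        proof (cases "ix \<le> iy")
          case True
          then have "P ! (ix - l1 u1) = P ! (ix - l1 u2)" using eq T1 T2 unfolding g3_def by simp
          moreover have "ix - l1 u1 < length P" "ix - l1 u2 < length P" using ix by auto
          ultimately have "ix - l1 u1 = ix - l1 u2" using pinj by blast
          then show ?thesis using k1 k2 by linarith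
        next
          case False
          then have "P ! (ix + l1 u1) = P ! (ix + l1 u2)" using eq T1 T2 unfolding g3_def by simp
          moreover have "ix + l1 u1 < length P" "ix + l1 u2 < length P" using k1 k2 k ix by linarith+
          ultimately have "ix + l1 u1 = ix + l1 u2" using pinj by blast
          then show ?thesis by linarith
        qed
        then have "d x u1 = d x u2" using k1 k2 unfolding l1_def by linarith
        then have "d x v1 = d x v2" using k1 k2 by linarith
        then show ?thesis using k1 k2 by metis
      next
        case T2: False
        have hh: "d u2 x < d v2 x" "d v2 y < d u2 y" using K3y[OF a2(1) a2(2) T2] by auto
        have k2: "l2 u2 + k \<le> iy" "l2 u2 + k \<le> m - iy" using kind3y[OF a2(1) hh(2) hh(1)] unfolding l2_def by auto
        show ?thesis
        proof (cases "ix \<le> iy")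
          case True
          then have "P ! (ix - l1 u1) = P ! (iy + l2 u2)" "P ! (ix - l1 u1 - 1) = P ! Suc (iy + l2 u2)"
            using eq T1 T2 unfolding g3_def by auto
          moreover have "ix - l1 u1 < length P" "ix - l1 u1 - 1 < length P" "iy + l2 u2 < length P" "Suc (iy + l2 u2) < length P"
            using ix iy k1 k2 k by linarith+
          ultimately have "ix - l1 u1 = iy + l2 u2" "ix - l1 u1 - 1 = Suc (iy + l2 u2)"
            using pinj by blast+
          then show ?thesis using k1 k by linarith
        next
          case False
          then have "P ! (ix + l1 u1) = P ! (iy - l2 u2)" using eq T1 T2 unfolding g3_def by auto
          moreover have "ix + l1 u1 < length P" "iy - l2 u2 < length P" using ix iy k1 k by linarith+
          ultimately have "ix + l1 u1 = iy - l2 u2" using pinj by blast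
          then show ?thesis using False by linarith
        qed
      qed
    next
      case T1: False
      have hh1: "d u1 x < d v1 x" "d v1 y < d u1 y" using K3y[OF a1(1) a1(2) T1] by auto
      have k1: "d y u1 \<le> d y (P ! iy) \<and> l2 u1 + k \<le> iy \<and> l2 u1 + k \<le> m - iy
        \<and> Suc (d x u1) < length Q \<and> u1 = Q ! (d x u1) \<and> v1 = Q ! Suc (d x u1) \<and> d x u1 + d y u1 = mq"
        using kind3y[OF a1(1) hh1(2) hh1(1)] unfolding l2_def by blast
      show ?thesis
      proof (cases "d v2 x < d u2 x")
        case T2: True
        have k2: "l1 u2 + k \<le> ix" "l1 u2 + k \<le> m - ix" using kind3x[OF a2(1) T2 K3x[OF a2(1) a2(3) T2]] unfolding l1_def by auto
        show ?thesis
        proof (cases "ix \<le> iy")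
          case True
          then have "P ! (ix - l1 u2) = P ! (iy + l2 u1)" "P ! (ix - l1 u2 - 1) = P ! Suc (iy + l2 u1)"
            using eq T1 T2 unfolding g3_def by auto
          moreover have "ix - l1 u2 < length P" "ix - l1 u2 - 1 < length P" "iy + l2 u1 < length P" "Suc (iy + l2 u1) < length P"
            using ix iy k1 k2 k by linarith+
          ultimately have "ix - l1 u2 = iy + l2 u1" "ix - l1 u2 - 1 = Suc (iy + l2 u1)"
            using pinj by blast+
          then show ?thesis using k2 k by linarith
        next
          case False
          then have "P ! (ix + l1 u2) = P ! (iy - l2 u1)" using eq T1 T2 unfolding g3_def by auto
          moreover have "ix + l1 u2 < length P" "iy - l2 u1 < length P" using ix iy k2 k by linarith+
          ultimately have "ix + l1 u2 = iy - l2 u1" using pinj by blast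
          then show ?thesis using False by linarith
        qed
      next
        case T2: False
        have hh2: "d u2 x < d v2 x" "d v2 y < d u2 y" using K3y[OF a2(1) a2(2) T2] by auto
        have k2: "d y u2 \<le> d y (P ! iy) \<and> l2 u2 + k \<le> iy \<and> l2 u2 + k \<le> m - iy
          \<and> Suc (d x u2) < length Q \<and> u2 = Q ! (d x u2) \<and> v2 = Q ! Suc (d x u2) \<and> d x u2 + d y u2 = mq"
          using kind3y[OF a2(1) hh2(2) hh2(1)] unfolding l2_def by blast
        have "l2 u1 = l2 u2"
        proof (cases "ix \<le> iy")
          case True
          then have "P ! (iy + l2 u1) = P ! (iy + l2 u2)" using eq T1 T2 unfolding g3_def by simp
          moreover have "iy + l2 u1 < length P" "iy + l2 u2 < length P" using k1 k2 k iy by linarith+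
          ultimately have "iy + l2 u1 = iy + l2 u2" using pinj by blast
          then show ?thesis by linarith
        next
          case False
          then have "P ! (iy - l2 u1) = P ! (iy - l2 u2)" using eq T1 T2 unfolding g3_def by simp
          moreover have "iy - l2 u1 < length P" "iy - l2 u2 < length P" using iy by auto
          ultimately have "iy - l2 u1 = iy - l2 u2" using pinj by blast
          then show ?thesis using k1 k2 by linarith
        qed
        then have "d y u1 = d y u2" using k1 k2 unfolding l2_def by linarith
        then have "d x u1 = d x u2" using k1 k2 by linarith
        then show ?thesis using k1 k2 by metis
      qed
    qed
  qed
  have img: "f ` Aor k (set P) \<subseteq> Aor k (set Q)"
  proof (clarsimp)
    fix u v assume uv: "(u, v) \<in> Aor k (set P)"
    show "f (u, v) \<in> Aor k (set Q)"
    proof (cases "\<forall>z\<in>set Q. d u z < d v z")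
      case True
      then show ?thesis using uv unfolding f_def Aor_def by auto
    next
      case n1: False
      show ?thesis
      proof (cases "\<forall>z\<in>set Q. d v z < d u z")
        case True
        then show ?thesis using K2_in[OF uv True] n1 unfolding f_def by auto
      next
        case False
        then show ?thesis using g3_in[OF uv n1 False] n1 unfolding f_def by auto
      qed
    qed
  qed
  have inj: "inj_on f (Aor k (set P))"
  proof (rule inj_onI, clarify)
    fix u1 v1 u2 v2
    assume a1: "(u1, v1) \<in> Aor k (set P)" and a2: "(u2, v2) \<in> Aor k (set P)" and eq: "f (u1, v1) = f (u2, v2)"
    have notP: "\<And>i j. i < length P \<Longrightarrow> j < length P \<Longrightarrow> (P ! i, P ! j) \<notin> Aor k (set P)" using noP by blast
    consider (A) "\<forall>z\<in>set Q. d u1 z < d v1 z"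
      | (B) "\<not> (\<forall>z\<in>set Q. d u1 z < d v1 z)" "\<forall>z\<in>set Q. d v1 z < d u1 z"
      | (C) "\<not> (\<forall>z\<in>set Q. d u1 z < d v1 z)" "\<not> (\<forall>z\<in>set Q. d v1 z < d u1 z)" by blast
    note c1 = this
    consider (A) "\<forall>z\<in>set Q. d u2 z < d v2 z"
      | (B) "\<not> (\<forall>z\<in>set Q. d u2 z < d v2 z)" "\<forall>z\<in>set Q. d v2 z < d u2 z"
      | (C) "\<not> (\<forall>z\<in>set Q. d u2 z < d v2 z)" "\<not> (\<forall>z\<in>set Q. d v2 z < d u2 z)" by blast
    note c2 = this
    have fA: "f (u, v) = (u, v)" if "\<forall>z\<in>set Q. d u z < d v z" for u v
      using that unfolding f_def by simp
    have fB: "f (u, v) = (v, u)" if "\<not> (\<forall>z\<in>set Q. d u z < d v z)" "\<forall>z\<in>set Q. d v z < d u z" for u v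
    proof -
      have "f (u, v) = (if \<forall>z\<in>set Q. d u z < d v z then (u, v) else if \<forall>z\<in>set Q. d v z < d u z then (v, u) else g3 u v)"
        unfolding f_def by simp
      then show ?thesis using that by presburger
    qed
    have fC: "f (u, v) = g3 u v" if "\<not> (\<forall>z\<in>set Q. d u z < d v z)" "\<not> (\<forall>z\<in>set Q. d v z < d u z)" for u v
    proof -
      have "f (u, v) = (if \<forall>z\<in>set Q. d u z < d v z then (u, v) else if \<forall>z\<in>set Q. d v z < d u z then (v, u) else g3 u v)"
        unfolding f_def by simp
      then show ?thesis using that by presburger
    qed
    show "u1 = u2 \<and> v1 = v2"
    proof (cases rule: c1)
      case A1: A
      have e1: "f (u1, v1) = (u1, v1)" using fA A1 by blast
      show ?thesis
      proof (cases rule: c2)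
        case A
        then show ?thesis using eq e1 fA by simp
      next
        case B
        then have "(v2, u2) = (u1, v1)" using eq e1 fB by simp
        then show ?thesis using rev_notin[OF a2] a1 by auto
      next
        case C
        then obtain i j where ij: "i < length P" "j < length P" "g3 u2 v2 = (P ! i, P ! j)" using g3_in[OF a2] by blast
        have "(u1, v1) = (P ! i, P ! j)" using eq e1 fC[OF C] ij(3) by simp
        then show ?thesis using notP[OF ij(1,2)] a1 by simp
      qed
    next
      case B1: B
      have e1: "f (u1, v1) = (v1, u1)" using fB B1 by blast
      show ?thesis
      proof (cases rule: c2)
        case A
        then have "(v1, u1) = (u2, v2)" using eq e1 fA by simp
        then show ?thesis using rev_notin[OF a1] a2 by auto
      next
        case B
        then show ?thesis using eq e1 fB by simp
      next
        case C
        then obtain i j where ij: "i < length P" "j < length P" "g3 u2 v2 = (P ! i, P ! j)" using g3_in[OF a2] by blast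
        have "(v1, u1) = (P ! i, P ! j)" using eq e1 fC[OF C] ij(3) by simp
        then have "(u1, v1) = (P ! j, P ! i)" by simp
        then show ?thesis using notP[OF ij(2,1)] a1 by simp
      qed
    next
      case C1: C
      obtain i j where ij: "i < length P" "j < length P" "g3 u1 v1 = (P ! i, P ! j)" using g3_in[OF a1 C1] by blast
      have e1: "f (u1, v1) = g3 u1 v1" using fC C1 by blast
      show ?thesis
      proof (cases rule: c2)
        case A
        have "(u2, v2) = (P ! i, P ! j)" using eq e1 fA[OF A] ij(3) by simp
        then show ?thesis using notP[OF ij(1,2)] a2 by simp
      next
        case B
        have "(v2, u2) = (P ! i, P ! j)" using eq e1 fB[OF B] ij(3) by simp
        then have "(u2, v2) = (P ! j, P ! i)" by simp
        then show ?thesis using notP[OF ij(2,1)] a2 by simp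
      next
        case C
        then have "g3 u1 v1 = g3 u2 v2" using eq e1 fC by simp
        then show ?thesis using g3_inj[OF a1 C1 a2 C] by simp
      qed
    qed
  qed
  show ?thesis using card_inj_on_le[OF inj img Aor_fin] .
qed

end

context tree begin

lemma lemma2:
  assumes P: "longest_path V E P" and Q: "is_path V E Q" and k: "1 \<le> k"
  shows "card (Aor k (set P)) \<le> card (Aor k (set Q))"
proof -
  have PP: "is_path V E P" using P unfolding longest_path_def by auto
  have Qne: "Q \<noteq> []" using Q unfolding is_path_def by auto
  have xV: "hd Q \<in> V" "last Q \<in> V" using Q Qne unfolding is_path_def by auto
  obtain ix where ix: "ix < length P" "\<forall>j<length P. d (hd Q) (P ! j) = d (hd Q) (P ! ix) + dd ix j"
    using proj[OF PP xV(1)] by blast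
  obtain iy where iy: "iy < length P" "\<forall>j<length P. d (last Q) (P ! j) = d (last Q) (P ! iy) + dd iy j"
    using proj[OF PP xV(2)] by blast
  have "lem2 V E P Q k ix iy" unfolding lem2_def lem2_axioms_def using tree_axioms P Q k ix iy by blast
  then interpret L: lem2 V E P Q k ix iy .
  show ?thesis using L.main2 .
qed

end

lemma rtrancl_cross: "(a, b) \<in> R\<^sup>* \<Longrightarrow> a \<in> Z \<Longrightarrow> b \<notin> Z \<Longrightarrow> \<exists>c c'. (c, c') \<in> R \<and> c \<in> Z \<and> c' \<notin> Z"
  by (induction rule: rtrancl_induct) auto

lemma walk_in: "walk (R \<inter> S \<times> S) xs \<Longrightarrow> hd xs \<in> S \<Longrightarrow> set xs \<subseteq> S"
proof (induction xs)
  case Nil then show ?case by simp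
next
  case (Cons a xs)
  then show ?case by (cases xs) (auto simp: walk_Cons)
qed

context tree begin

lemma conn_both:
  assumes S: "connected_on E S" and e: "{u, v} \<in> E" and a: "a \<in> S" "a \<in> cm u v" and b: "b \<in> S" "b \<in> V" "b \<notin> cm u v"
  shows "u \<in> S \<and> v \<in> S"
proof -
  have r: "(a, b) \<in> (adj \<inter> S \<times> S)\<^sup>*" using S a(1) b(1) unfolding connected_on_def by blast
  obtain c c' where cc: "(c, c') \<in> adj \<inter> S \<times> S" "c \<in> cm u v" "c' \<notin> cm u v"
    using rtrancl_cross[OF r a(2) b(3)] by blast
  have "c' \<in> V" using cc(1) adj_V by blast
  then have "c = v \<and> c' = u" using edge_leave[OF e cc(2) _ cc(3)] cc(1) by (auto simp: adj_iff)
  then show ?thesis using cc(1) by auto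
qed

lemma conn_diam:
  assumes S: "connected_on E S" and fin: "finite S" and a: "a \<in> S" and b: "b \<in> S"
  shows "d a b \<le> card S - 1"
proof -
  have r: "(a, b) \<in> (adj \<inter> S \<times> S)\<^sup>*" using S a b unfolding connected_on_def by blast
  obtain xs where xs: "xs \<noteq> []" "distinct xs" "walk (adj \<inter> S \<times> S) xs" "hd xs = a" "last xs = b"
    using rtrancl_distinct_walk[OF r] by blast
  have "set xs \<subseteq> S" using walk_in[OF xs(3)] xs(4) a by blast
  then have "card (set xs) \<le> card S" using fin by (rule card_mono[rotated])
  then have "length xs \<le> card S" using distinct_card[OF xs(2)] by simp
  moreover have "walk adj xs" using xs(3) walk_mono by blast
  then have "(hd xs, last xs) \<in> adj ^^ (length xs - 1)" using walk_relpow xs(1) by blast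
  then have "(a, b) \<in> adj ^^ (length xs - 1)" using xs by simp
  then have "d a b \<le> length xs - 1" by (rule d_le)
  ultimately show ?thesis by linarith
qed

end

locale wk = tree +
  fixes k :: nat and cs :: "'a list list"
  assumes sw: "spanning_walk V E k cs" and k: "1 \<le> k"
begin

abbreviation "S t \<equiv> set (cs ! t)"
abbreviation "L \<equiv> length cs - 1"

lemma rw: "restricted_walk V E k cs" using sw unfolding spanning_walk_def by auto
lemma csne: "cs \<noteq> []" using rw unfolding restricted_walk_def by auto
lemma cfg: "t < length cs \<Longrightarrow> is_config V E k (cs ! t)" using rw unfolding restricted_walk_def by auto
lemma stepc: "Suc t < length cs \<Longrightarrow> config_adj E (cs ! t) (cs ! Suc t) \<and> card (S (Suc t) - S t) = 1"
  using rw unfolding restricted_walk_def by auto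
lemma cover: "z \<in> V \<Longrightarrow> \<exists>t < length cs. z \<in> S t"
proof -
  assume "z \<in> V"
  then obtain c where "c \<in> set cs" "z \<in> set c" using sw unfolding spanning_walk_def by auto
  then show ?thesis by (metis in_set_conv_nth)
qed

lemma S_V: "t < length cs \<Longrightarrow> S t \<subseteq> V" using cfg unfolding is_config_def by auto
lemma S_card: "t < length cs \<Longrightarrow> card (S t) = k" using cfg unfolding is_config_def by (auto simp: distinct_card)
lemma S_conn: "t < length cs \<Longrightarrow> connected_on E (S t)" using cfg unfolding is_config_def by auto

lemma newv: "Suc t < length cs \<Longrightarrow> \<exists>b c. S (Suc t) - S t = {b} \<and> c \<in> S t \<and> {c, b} \<in> E"
proof -
  assume st: "Suc t < length cs"
  obtain b where b: "S (Suc t) - S t = {b}" using stepc[OF st] card_1_singletonE by metis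
  show ?thesis
  proof (cases "k = 1")
    case True
    have l: "length (cs ! t) = 1" "length (cs ! Suc t) = 1" using cfg st True unfolding is_config_def by auto
    then obtain a a' where aa: "cs ! t = [a]" "cs ! Suc t = [a']"
      by (metis One_nat_def length_0_conv length_Suc_conv)
    have "a' = b" "a \<noteq> a'" using b aa by auto
    moreover have "a = a' \<or> {a, a'} \<in> E" using stepc[OF st] aa unfolding config_adj_def by auto
    ultimately show ?thesis using b aa by auto
  next
    case False
    then have k2: "card (S (Suc t)) \<ge> 2" using S_card st k by auto
    have bin: "b \<in> S (Suc t)" using b by auto
    obtain z where z: "z \<in> S (Suc t)" "z \<noteq> b"
    proof -
      have "S (Suc t) \<noteq> {b}" using k2 by auto
      then show ?thesis using that bin by blast
    qed
    have "(b, z) \<in> (adj \<inter> S (Suc t) \<times> S (Suc t))\<^sup>*" using S_conn[OF st] bin z unfolding connected_on_def by auto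
    then obtain c where c: "(b, c) \<in> adj \<inter> S (Suc t) \<times> S (Suc t)"
      using z(2) by (metis converse_rtranclE)
    have "c \<noteq> b" using c adj_V by blast
    then have "c \<in> S t" using c b by auto
    moreover have "{c, b} \<in> E" using c by (auto simp: adj_iff insert_commute)
    ultimately show ?thesis using b by blast
  qed
qed

definition cross :: "nat \<Rightarrow> 'a set \<Rightarrow> bool" where
  "cross t Z \<longleftrightarrow> Suc t < length cs \<and> S t \<inter> Z = {} \<and> S (Suc t) \<inter> Z \<noteq> {}"

lemma first_cross: "a \<le> b \<Longrightarrow> b < length cs \<Longrightarrow> S a \<inter> Z = {} \<Longrightarrow> S b \<inter> Z \<noteq> {} \<Longrightarrow> \<exists>t. a \<le> t \<and> t < b \<and> cross t Z"
proof (induction b)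
  case 0 then show ?case by simp
next
  case (Suc b)
  show ?case
  proof (cases "S b \<inter> Z = {}")
    case True
    have "a \<le> b"
    proof (rule ccontr)
      assume "\<not> a \<le> b" then have "a = Suc b" using Suc by simp
      then show False using Suc.prems by simp
    qed
    then show ?thesis using True Suc.prems unfolding cross_def by (intro exI[of _ b]) auto
  next
    case False
    have "a \<le> b"
    proof (rule ccontr)
      assume "\<not> a \<le> b" then have "a = Suc b" using Suc by simp
      then show False using Suc.prems by simp
    qed
    then obtain t where "a \<le> t" "t < b" "cross t Z" using Suc False by auto
    then show ?thesis by (intro exI[of _ t]) auto
  qed
qed

definition Cset :: "'a set \<Rightarrow> nat set" where
  "Cset e = {t. \<exists>u v. e = {u, v} \<and> cross t (cm u v)}"

lemma Cset_sub: "Cset e \<subseteq> {..<L}"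
  unfolding Cset_def cross_def by auto

lemma cross_edge:
  assumes e: "{u, v} \<in> E" and c: "cross t (cm u v)" and nb: "S (Suc t) - S t = {b}" "c \<in> S t" "{c, b} \<in> E"
  shows "{u, v} = {c, b}"
proof -
  have st: "Suc t < length cs" using c unfolding cross_def by auto
  obtain z where z: "z \<in> S (Suc t)" "z \<in> cm u v" using c unfolding cross_def by auto
  have "z \<notin> S t" using z c unfolding cross_def by auto
  then have zb: "z = b" using z nb by auto
  have cn: "c \<notin> cm u v" using nb c unfolding cross_def by auto
  have "t < length cs" using st by simp
  then have cV: "c \<in> V" using nb(2) S_V by blast
  have "b = v \<and> c = u" using edge_leave[OF e _ cV cn] z zb nb(3) by (simp add: insert_commute)
  then show ?thesis by auto
qed

lemma Cset_disj: "e1 \<in> E \<Longrightarrow> e2 \<in> E \<Longrightarrow> t \<in> Cset e1 \<Longrightarrow> t \<in> Cset e2 \<Longrightarrow> e1 = e2"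
proof -
  assume a: "e1 \<in> E" "e2 \<in> E" "t \<in> Cset e1" "t \<in> Cset e2"
  obtain u1 v1 where 1: "e1 = {u1, v1}" "cross t (cm u1 v1)" using a unfolding Cset_def by auto
  obtain u2 v2 where 2: "e2 = {u2, v2}" "cross t (cm u2 v2)" using a unfolding Cset_def by auto
  have st: "Suc t < length cs" using 1 unfolding cross_def by auto
  obtain b c where nb: "S (Suc t) - S t = {b}" "c \<in> S t" "{c, b} \<in> E" using newv[OF st] by blast
  have "e1 = {c, b}" using cross_edge[OF _ 1(2) nb] 1 a by simp
  moreover have "e2 = {c, b}" using cross_edge[OF _ 2(2) nb] 2 a by simp
  ultimately show ?thesis by simp
qed

lemma sum_Cset: "(\<Sum>e\<in>E. card (Cset e)) \<le> L"
proof -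
  have fin: "\<And>e. finite (Cset e)" using Cset_sub finite_subset by blast
  have "(\<Sum>e\<in>E. card (Cset e)) = card (\<Union>e\<in>E. Cset e)"
    by (rule card_UN_disjoint[symmetric]) (use finE fin Cset_disj in blast)+
  also have "\<dots> \<le> card {..<L}" by (rule card_mono) (use Cset_sub in auto)
  finally show ?thesis by simp
qed

lemma L_lt: "L < length cs" "0 < length cs" using csne by auto

lemma edge_bound:
  assumes Q: "is_path V E Q" and hq: "hd Q \<in> S 0" and lq: "last Q \<in> S L" and e: "e \<in> E"
  shows "(if e \<subseteq> S 0 then 0 else 1) + (if \<exists>u v. e = {u, v} \<and> (u, v) \<in> Aor k (set Q) then 1 else 0)
    \<le> card (Cset e)"
proof -
  have fin: "finite (Cset e)" using Cset_sub finite_subset by blast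
  have S0V: "S 0 \<subseteq> V" "connected_on E (S 0)" using S_V S_conn L_lt by auto
  obtain u0 v0 where e0: "e = {u0, v0}" "u0 \<in> V" "v0 \<in> V" using edgeE[OF e] by blast
  have A: "Cset e \<noteq> {}" if nA: "\<not> e \<subseteq> S 0"
  proof -
    have e1: "{u0, v0} \<in> E" "{v0, u0} \<in> E" using e e0 by (auto simp: insert_commute)
    have one: "S 0 \<inter> cm u0 v0 = {} \<or> S 0 \<inter> cm v0 u0 = {}"
    proof (rule ccontr)
      assume "\<not> (S 0 \<inter> cm u0 v0 = {} \<or> S 0 \<inter> cm v0 u0 = {})"
      then obtain a b where ab: "a \<in> S 0" "a \<in> cm u0 v0" "b \<in> S 0" "b \<in> cm v0 u0" by blast
      have "b \<notin> cm u0 v0" using cm_disj[OF e1(1)] ab by auto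
      then have "u0 \<in> S 0 \<and> v0 \<in> S 0" using conn_both[OF S0V(2) e1(1) ab(1,2) ab(3) _] ab cm_V by blast
      then show False using nA e0 by auto
    qed
    show ?thesis
    proof (cases "S 0 \<inter> cm u0 v0 = {}")
      case True
      obtain j where j: "j < length cs" "v0 \<in> S j" using cover e0 by blast
      have "S j \<inter> cm u0 v0 \<noteq> {}" using j cm_self[OF e0(3), of u0] by auto
      then obtain t where "cross t (cm u0 v0)" using first_cross[of 0 j] j True by auto
      then have "t \<in> Cset e" unfolding Cset_def using e0 by auto
      then show ?thesis by auto
    next
      case False
      then have F: "S 0 \<inter> cm v0 u0 = {}" using one by simp
      obtain j where j: "j < length cs" "u0 \<in> S j" using cover e0 by blast
      have "S j \<inter> cm v0 u0 \<noteq> {}" using j cm_self[OF e0(2), of v0] by auto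
      then obtain t where t: "cross t (cm v0 u0)" using first_cross[of 0 j] j F by auto
      have "e = {v0, u0}" using e0 by (simp add: insert_commute)
      then have "t \<in> Cset e" unfolding Cset_def using t by blast
      then show ?thesis by auto
    qed
  qed
  have B: "\<exists>t2. t2 \<in> Cset e \<and> (\<not> e \<subseteq> S 0 \<longrightarrow> (\<exists>t1. t1 \<in> Cset e \<and> t1 \<noteq> t2))"
    if hB: "\<exists>u v. e = {u, v} \<and> (u, v) \<in> Aor k (set Q)"
  proof -
    obtain u v where uv: "e = {u, v}" "(u, v) \<in> Aor k (set Q)" using hB by blast
    have euv: "{u, v} \<in> E" and allQ: "\<forall>z\<in>set Q. d u z < d v z" using uv unfolding Aor_def by auto
    obtain w where w: "w \<in> V" "d v w < d u w" "k \<le> d u w" using uv unfolding Aor_def by auto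
    have evu: "{v, u} \<in> E" using euv by (simp add: insert_commute)
    have Qne: "Q \<noteq> []" using Q unfolding is_path_def by auto
    have wc: "w \<in> cm u v" using side_iff[OF euv w(1)] w(2) by simp
    have hQs: "hd Q \<in> set Q" "last Q \<in> set Q" using Qne by auto
    have hQV: "hd Q \<in> V" "last Q \<in> V" using hQs Q unfolding is_path_def by auto
    have hQ: "hd Q \<in> cm v u" "last Q \<in> cm v u"
      using side_iff[OF evu hQV(1)] side_iff[OF evu hQV(2)] allQ hQs by auto
    obtain j where j: "j < length cs" "w \<in> S j" using cover w by blast
    have Sj: "S j \<inter> cm v u = {}"
    proof (rule ccontr)
      assume "S j \<inter> cm v u \<noteq> {}"
      then obtain z where z: "z \<in> S j" "z \<in> cm v u" by blast
      have "z \<notin> cm u v" using cm_disj[OF euv] z by auto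
      then have "u \<in> S j" using conn_both[OF S_conn[OF j(1)] euv j(2) wc z(1) _] z cm_V by blast
      then have "d u w \<le> card (S j) - 1" using conn_diam[OF S_conn[OF j(1)] _ _ j(2)] by simp
      then show False using S_card[OF j(1)] w(3) k by simp
    qed
    have jL: "j < L"
    proof -
      have "j \<noteq> L" using Sj hQ(2) lq by auto
      then show ?thesis using j by simp
    qed
    obtain t2 where t2: "j \<le> t2" "t2 < L" "cross t2 (cm v u)"
      using first_cross[of j L "cm v u"] jL L_lt Sj hQ(2) lq by auto
    have "e = {v, u}" using uv by (simp add: insert_commute)
    then have t2C: "t2 \<in> Cset e" unfolding Cset_def using t2(3) by blast
    have "\<exists>t1. t1 \<in> Cset e \<and> t1 \<noteq> t2" if nA: "\<not> e \<subseteq> S 0"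
    proof -
      have S0: "S 0 \<inter> cm u v = {}"
      proof (rule ccontr)
        assume "S 0 \<inter> cm u v \<noteq> {}"
        then obtain a where a: "a \<in> S 0" "a \<in> cm u v" by blast
        have "hd Q \<notin> cm u v" using cm_disj[OF euv] hQ by auto
        then have "u \<in> S 0 \<and> v \<in> S 0" using conn_both[OF S0V(2) euv a hq _] hQ cm_V by blast
        then show False using nA uv by auto
      qed
      have "S j \<inter> cm u v \<noteq> {}" using j wc by auto
      then obtain t1 where t1: "t1 < j" "cross t1 (cm u v)" using first_cross[of 0 j "cm u v"] j S0 by auto
      have "t1 \<in> Cset e" unfolding Cset_def using t1 uv by auto
      then show ?thesis using t1 t2 by (intro exI[of _ t1]) auto
    qed
    then show ?thesis using t2C by blast
  qed
  show ?thesis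
  proof (cases "\<exists>u v. e = {u, v} \<and> (u, v) \<in> Aor k (set Q)")
    case True
    obtain t2 where t2: "t2 \<in> Cset e" "\<not> e \<subseteq> S 0 \<longrightarrow> (\<exists>t1. t1 \<in> Cset e \<and> t1 \<noteq> t2)" using B[OF True] by blast
    show ?thesis
    proof (cases "e \<subseteq> S 0")
      case c: True
      have "1 \<le> card (Cset e)" using t2 fin by (metis card_0_eq empty_iff less_one not_less)
      then show ?thesis using True c by simp
    next
      case c: False
      then obtain t1 where t1: "t1 \<in> Cset e" "t1 \<noteq> t2" using t2 by blast
      have "card {t1, t2} \<le> card (Cset e)" using t1 t2 fin by (intro card_mono) auto
      then show ?thesis using True c t1 by simp
    qed
  next
    case False
    show ?thesis
    proof (cases "e \<subseteq> S 0")
      case True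
      have "(if \<exists>u v. e = {u, v} \<and> (u, v) \<in> Aor k (set Q) then 1 else 0) = (0::nat)" using False by (rule if_not_P)
      then show ?thesis using True by simp
    next
      case c: False
      have "Cset e \<noteq> {}" using A[OF c] .
      then have "1 \<le> card (Cset e)" using fin by (metis card_0_eq less_one not_less)
      moreover have "(if \<exists>u v. e = {u, v} \<and> (u, v) \<in> Aor k (set Q) then 1 else 0) = (0::nat)" using False by (rule if_not_P)
      ultimately show ?thesis using c by simp
    qed
  qed
qed

lemma nonS0: "card V - k \<le> card {e\<in>E. \<not> e \<subseteq> S 0}"
proof -
  have S0V: "S 0 \<subseteq> V" "card (S 0) = k" using S_V S_card L_lt by auto
  then have "S 0 \<noteq> {}" using k by auto
  then obtain s0 where s0: "s0 \<in> S 0" by (meson ex_in_conv)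
  have s0V: "s0 \<in> V" using s0 S0V by auto
  define nx where "nx z = (SOME c. {z, c} \<in> E \<and> Suc (d c s0) = d z s0)" for z
  have nx: "{z, nx z} \<in> E \<and> Suc (d (nx z) s0) = d z s0" if "z \<in> V - S 0" for z
  proof -
    have "z \<noteq> s0" using that s0 by auto
    then have "\<exists>c. {z, c} \<in> E \<and> Suc (d c s0) = d z s0" using d_step that s0V by blast
    then show ?thesis unfolding nx_def by (rule someI_ex)
  qed
  define g where "g z = {z, nx z}" for z
  have inj: "inj_on g (V - S 0)"
  proof (rule inj_onI)
    fix z1 z2 assume z: "z1 \<in> V - S 0" "z2 \<in> V - S 0" "g z1 = g z2"
    show "z1 = z2"
    proof (rule ccontr)
      assume ne: "z1 \<noteq> z2"
      then have "z1 = nx z2" "z2 = nx z1" using z(3) unfolding g_def by (auto simp: doubleton_eq_iff)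
      then show False using nx[OF z(1)] nx[OF z(2)] by simp
    qed
  qed
  have img: "g ` (V - S 0) \<subseteq> {e\<in>E. \<not> e \<subseteq> S 0}"
    using nx unfolding g_def by auto
  have fin: "finite {e\<in>E. \<not> e \<subseteq> S 0}" using finE by simp
  have "card (V - S 0) \<le> card {e\<in>E. \<not> e \<subseteq> S 0}" using card_inj_on_le[OF inj img fin] .
  moreover have "card (V - S 0) = card V - k" using S0V finV by (simp add: card_Diff_subset finite_subset)
  ultimately show ?thesis by simp
qed

lemma walk_bound:
  assumes P: "longest_path V E P"
  shows "(card V - k) + card (Aor k (set P)) \<le> L"
proof -
  have "S 0 \<noteq> {}" "S L \<noteq> {}" using S_card L_lt k by fastforce+
  then obtain x0 xl where x: "x0 \<in> S 0" "xl \<in> S L" by (meson ex_in_conv)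
  have xV: "x0 \<in> V" "xl \<in> V" using x S_V L_lt by blast+
  obtain Q where Q: "is_path V E Q" "hd Q = x0" "last Q = xl" using path_exists[OF xV] by blast
  let ?A = "\<lambda>e. if e \<subseteq> S 0 then 0 else 1::nat"
  let ?B = "\<lambda>e. if \<exists>u v. e = {u, v} \<and> (u, v) \<in> Aor k (set Q) then 1 else 0::nat"
  have "(\<Sum>e\<in>E. ?A e + ?B e) \<le> (\<Sum>e\<in>E. card (Cset e))"
    by (rule sum_mono) (use edge_bound[OF Q(1)] Q x in auto)
  also have "\<dots> \<le> L" by (rule sum_Cset)
  finally have 1: "(\<Sum>e\<in>E. ?A e) + (\<Sum>e\<in>E. ?B e) \<le> L" by (simp add: sum.distrib)
  have "(\<Sum>e\<in>E. ?A e) = card {e\<in>E. \<not> e \<subseteq> S 0}"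
  proof -
    have "(\<Sum>e\<in>E. ?A e) = (\<Sum>e\<in>E. if \<not> e \<subseteq> S 0 then 1 else 0)" by (rule sum.cong) auto
    then show ?thesis using sum.inter_filter[OF finE, of "\<lambda>_. 1::nat" "\<lambda>e. \<not> e \<subseteq> S 0"] by simp
  qed
  moreover have "(\<Sum>e\<in>E. ?B e) = card (Aor k (set Q))"
    using sum_dkP[OF Q(1), of k] dkP_char[OF Q(1)] by simp
  moreover have "card (Aor k (set P)) \<le> card (Aor k (set Q))" using lemma2[OF P Q(1) k] .
  ultimately show ?thesis using 1 nonS0 by linarith
qed

end

theorem mainTheorem6:
  fixes V :: "'a set" and E :: "'a set set" and k :: nat and P :: "'a list"
  assumes "is_tree V E"
    and "1 \<le> k" and "k \<le> card V"
    and "longest_path V E P"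
  shows "hrk k V E \<ge> enat ((card V - k) + (\<Sum>e\<in>E. dkP k V E P e))"
proof -
  interpret tree V E using assms(1) by (rule tree.intro)
  have PP: "is_path V E P" using assms(4) unfolding longest_path_def by auto
  have s: "(\<Sum>e\<in>E. dkP k V E P e) = card (Aor k (set P))" using sum_dkP[OF PP] .
  show ?thesis unfolding hrk_def
  proof (rule INF_greatest)
    fix cs assume "cs \<in> {cs. spanning_walk V E k cs}"
    then have "wk V E k cs" by (intro wk.intro tree.intro wk_axioms.intro) (use assms in auto)
    then interpret W: wk V E k cs .
    have "(card V - k) + card (Aor k (set P)) \<le> length cs - 1" using W.walk_bound[OF assms(4)] .
    then show "enat ((card V - k) + (\<Sum>e\<in>E. dkP k V E P e)) \<le> enat (length cs - 1)" using s by simp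
  qed
qed

end
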